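(* Consider a network whose three-phase primary line has non-substation nodes $1,\dots,N$, and $M$ loads, each load $k$ attached to exactly one node $\nu(k)$ and having a known type: single-phase, two-phase, or three-phase. Define the $3N\times 3M$ matrices $\hat U^1,\hat U^2$ of $3\times3$ blocks, with $(n,k)$-blocks $\hat U^1_{nk}=\hat U^2_{nk}=\mathbb 0_{3\times3}$ if $n\ne\nu(k)$, and for $n=\nu(k)$: $\hat U^1_{nk}=I_3,\ \hat U^2_{nk}=\mathbb 0_{3\times3}$ if $k$ is single-phase; $\hat U^1_{nk}=\tfrac12W_1^T,\ \hat U^2_{nk}=\tfrac{\sqrt3}{6}W_2^T$ if $k$ is two-phase; $\hat U^1_{nk}=\tfrac13\mathbb 1_{3\times3},\ \hat U^2_{nk}=\mathbb 0_{3\times3}$ if $k$ is three-phase, where $$W_1=\begin{bmatrix}1&1&0\\0&1&1\\1&0&1\end{bmatrix},\qquad W_2=\begin{bmatrix}1&-1&0\\0&1&-1\\-1&0&1\end{bmatrix}.$$ Let $G,H$ be arbitrary real $3M\times 3N$ matrices and set $\hat K=G\hat U^1+H\hat U^2$, $\hat L=G\hat U^2-H\hat U^1$. With $\mathcal F$, $X(\boldsymbol x)$, $\tilde{\boldsymbol v}(t,\boldsymbol x)$, $\tilde{\boldsymbol v}(t)=\tilde{\boldsymbol v}(t,\boldsymbol x^* )+\boldsymbol n(t)$, $\boldsymbol n(t)\sim\mathcal N(\mathbf 0_M,\Sigma_n)$ and hypotheses (1)–(3) exactly as in the setting below, fix a load index $m$ and define, writing $\tilde v_m(t)$, $\tilde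 v_m(t,\boldsymbol x)$ for the $m$-th entries, $$f_{m,T}(\boldsymbol x)=\frac1T\sum_{t=1}^T[\tilde v_m(t)-\tilde v_m(t,\boldsymbol x)]^2.$$ Then (a) almost surely $\lim_{T\to\infty}f_{m,T}(\boldsymbol x^* )$ exists and $\liminf_{T\to\infty}f_{m,T}(\boldsymbol x)\ge\lim_{T\to\infty}f_{m,T}(\boldsymbol x^* )$ for all $\boldsymbol x\in\mathcal F$, i.e. $\boldsymbol x^*$ is a global minimizer of $f_{m,T}$ as $T\to\infty$; and (b) every $\boldsymbol x\in\mathcal F$ such that $x_m^i=x_m^{*i}$ for all $i$ and $x_k^i=x_k^{*i}$ for all $i$ and all $k\ne m$ for which load $k$ is not three-phase, satisfies $\tilde v_m(t,\boldsymbol x)=\tilde v_m(t,\boldsymbol x^* )$ for all $t$, and hence is also a global minimizer of $f_{m,T}$ as $T\to\infty$.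
   Context: Setting (shared): $\mathcal F$ is the set of $\boldsymbol x=[x_1^1,x_1^2,x_1^3,\dots,x_M^1,x_M^2,x_M^3]^T\in\{0,1\}^{3M}$ with $\sum_{i=1}^3x_k^i=1$ for each $k$; $X(\boldsymbol x)=\mathrm{diag}([x_1^1\ x_1^2\ x_1^3],\dots,[x_M^1\ x_M^2\ x_M^3])$ is $M\times3M$ block diagonal; for random inputs $\tilde{\boldsymbol v}^{\mathrm{ref}}(t)\in\mathbb R^{3M}$, $\tilde{\boldsymbol p}(t),\tilde{\boldsymbol q}(t)\in\mathbb R^M$, $\tilde{\boldsymbol v}(t,\boldsymbol x)=X\tilde{\boldsymbol v}^{\mathrm{ref}}(t)+X\hat KX^T\tilde{\boldsymbol p}(t)+X\hat LX^T\tilde{\boldsymbol q}(t)$; $\boldsymbol x^*\in\mathcal F$ is the true phase connection, $\Sigma_n$ is positive definite. Hypotheses: (1) the $\boldsymbol n(t)$ are i.i.d. and the noise sequence is independent of the input sequence $(\tilde{\boldsymbol v}^{\mathrm{ref}}(t),\tilde{\boldsymbol p}(t),\tilde{\boldsymbol q}(t))_{t\ge1}$; (2) the input triples are independent across distinct times; (3) for each $\boldsymbol x\in\mathcal F$, $\sup_t\mathbb E\|\tilde{\boldsymbol v}(t,\boldsymbol x^* )-\tilde{\boldsymbol v}(t,\boldsymbol x)\|^2<\infty$. $I_n$ is the identity, $\mathbb 0_{k\times l}$, $\mathbb 1_{k\times l}$ the all-zero/all-one matrices. For a single-phase load the three connections are $AN,BN,CN$; for a two-phase (delta) load $AB,BC,CA$;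 for a three-phase load the index indicates which phase's voltage is measured. $f_{m,T}$ is, up to constants and positive scaling, the negative marginal log-likelihood of load $m$'s observations. *)

theory Defs
  imports "HOL-Probability.Probability"
begin

text \<open>Indexing conventions (0-based): nodes n < N, loads k < M, phases a < 3.
  A 3M-vector has entry 3*k+a for phase a of load k; a 3N-vector entry 3*n+a.
  Vectors and matrices are functions on nat, used only within the stated ranges.\<close>

datatype loadtype = SinglePhase | TwoPhase | ThreePhase

definition W1 :: "nat \<Rightarrow> nat \<Rightarrow> real" where
  "W1 i j = [[1,1,0],[0,1,1],[1,0,1]] ! i ! j"

definition W2 :: "nat \<Rightarrow> nat \<Rightarrow> real" where
  "W2 i j = [[1,-1,0],[0,1,-1],[-1,0,1]] ! i ! j"

definition U1 :: "(nat \<Rightarrow> nat) \<Rightarrow> (nat \<Rightarrow> loadtype) \<Rightarrow> nat \<Rightarrow> nat \<Rightarrow> real" where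
  "U1 \<nu> ty r c =
     (if r div 3 \<noteq> \<nu> (c div 3) then 0 else
      (case ty (c div 3) of
         SinglePhase \<Rightarrow> (if r mod 3 = c mod 3 then 1 else 0)
       | TwoPhase \<Rightarrow> 1/2 * W1 (c mod 3) (r mod 3)
       | ThreePhase \<Rightarrow> 1/3))"

definition U2 :: "(nat \<Rightarrow> nat) \<Rightarrow> (nat \<Rightarrow> loadtype) \<Rightarrow> nat \<Rightarrow> nat \<Rightarrow> real" where
  "U2 \<nu> ty r c =
     (if r div 3 \<noteq> \<nu> (c div 3) then 0 else
      (case ty (c div 3) of
         SinglePhase \<Rightarrow> 0
       | TwoPhase \<Rightarrow> sqrt 3 / 6 * W2 (c mod 3) (r mod 3)
       | ThreePhase \<Rightarrow> 0))"

definition Khat :: "nat \<Rightarrow> (nat \<Rightarrow> nat) \<Rightarrow> (nat \<Rightarrow> loadtype) \<Rightarrow> (nat \<Rightarrow> nat \<Rightarrow> real) \<Rightarrow> (nat \<Rightarrow> nat \<Rightarrow> real) \<Rightarrow> nat \<Rightarrow> nat \<Rightarrow> real" where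
  "Khat N \<nu> ty G H i j = (\<Sum>l<3*N. G i l * U1 \<nu> ty l j) + (\<Sum>l<3*N. H i l * U2 \<nu> ty l j)"

definition Lhat :: "nat \<Rightarrow> (nat \<Rightarrow> nat) \<Rightarrow> (nat \<Rightarrow> loadtype) \<Rightarrow> (nat \<Rightarrow> nat \<Rightarrow> real) \<Rightarrow> (nat \<Rightarrow> nat \<Rightarrow> real) \<Rightarrow> nat \<Rightarrow> nat \<Rightarrow> real" where
  "Lhat N \<nu> ty G H i j = (\<Sum>l<3*N. G i l * U2 \<nu> ty l j) - (\<Sum>l<3*N. H i l * U1 \<nu> ty l j)"

definition feasible :: "nat \<Rightarrow> (nat \<Rightarrow> real) set" where
  "feasible M = {x. (\<forall>j<3*M. x j \<in> {0,1}) \<and> (\<forall>j\<ge>3*M. x j = 0)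
                    \<and> (\<forall>k<M. x (3*k) + x (3*k+1) + x (3*k+2) = 1)}"

definition Xmat :: "(nat \<Rightarrow> real) \<Rightarrow> nat \<Rightarrow> nat \<Rightarrow> real" where
  "Xmat x k j = (if j div 3 = k then x j else 0)"

text \<open>v-tilde(x) = X vref + X K X^T p + X L X^T q, k-th entry (k < M).\<close>
definition vtil :: "nat \<Rightarrow> (nat \<Rightarrow> nat \<Rightarrow> real) \<Rightarrow> (nat \<Rightarrow> nat \<Rightarrow> real) \<Rightarrow> (nat \<Rightarrow> real)
    \<Rightarrow> (nat \<Rightarrow> real) \<Rightarrow> (nat \<Rightarrow> real) \<Rightarrow> (nat \<Rightarrow> real) \<Rightarrow> nat \<Rightarrow> real" where
  "vtil M K L x vref p q k =
     (\<Sum>j<3*M. Xmat x k j * vref j)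
   + (\<Sum>j<3*M. \<Sum>l<3*M. Xmat x k j * K j l * (\<Sum>k'<M. Xmat x k' l * p k'))
   + (\<Sum>j<3*M. \<Sum>l<3*M. Xmat x k j * L j l * (\<Sum>k'<M. Xmat x k' l * q k'))"

text \<open>Gaussian random vector (Z_0,...,Z_{d-1}) with mean 0 and covariance S:
  every nontrivial linear combination is N(0, a^T S a) (sigma = standard deviation).\<close>
definition gaussian_vec :: "'w measure \<Rightarrow> nat \<Rightarrow> (nat \<Rightarrow> nat \<Rightarrow> real) \<Rightarrow> (nat \<Rightarrow> 'w \<Rightarrow> real) \<Rightarrow> bool" where
  "gaussian_vec P d S Z \<longleftrightarrow>
     (\<forall>i<d. Z i \<in> borel_measurable P) \<and>
     (\<forall>a::nat \<Rightarrow> real. (\<exists>i<d. a i \<noteq> 0) \<longrightarrow>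
        distributed P lborel (\<lambda>\<omega>. \<Sum>i<d. a i * Z i \<omega>)
          (\<lambda>y. ennreal (normal_density 0 (sqrt (\<Sum>i<d. \<Sum>j<d. a i * S i j * a j)) y)))"

definition pos_def_mat :: "nat \<Rightarrow> (nat \<Rightarrow> nat \<Rightarrow> real) \<Rightarrow> bool" where
  "pos_def_mat d S \<longleftrightarrow> (\<forall>i<d. \<forall>j<d. S i j = S j i) \<and>
     (\<forall>a::nat \<Rightarrow> real. (\<exists>i<d. a i \<noteq> 0) \<longrightarrow> (\<Sum>i<d. \<Sum>j<d. a i * S i j * a j) > 0)"

definition vecM :: "nat \<Rightarrow> (nat \<Rightarrow> real) measure" where
  "vecM d = PiM {..<d} (\<lambda>_. borel)"

definition fmT :: "nat \<Rightarrow> (nat \<Rightarrow> nat \<Rightarrow> real) \<Rightarrow> (nat \<Rightarrow> nat \<Rightarrow> real)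
   \<Rightarrow> (nat \<Rightarrow> 'w \<Rightarrow> nat \<Rightarrow> real) \<Rightarrow> (nat \<Rightarrow> 'w \<Rightarrow> nat \<Rightarrow> real) \<Rightarrow> (nat \<Rightarrow> 'w \<Rightarrow> nat \<Rightarrow> real)
   \<Rightarrow> (nat \<Rightarrow> 'w \<Rightarrow> nat \<Rightarrow> real) \<Rightarrow> (nat \<Rightarrow> real) \<Rightarrow> nat \<Rightarrow> nat \<Rightarrow> (nat \<Rightarrow> real) \<Rightarrow> 'w \<Rightarrow> real" where
  "fmT M K L vref p q n xs m T x \<omega> =
     (1 / real T) * (\<Sum>t\<in>{1..T}.
        ((vtil M K L xs (vref t \<omega>) (p t \<omega>) (q t \<omega>) m + n t \<omega> m)
         - vtil M K L x (vref t \<omega>) (p t \<omega>) (q t \<omega>) m)\<^sup>2)"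

end

theory Submission imports Defs begin

lemma absprod_le: "\<bar>(a::real) * b\<bar> \<le> a\<^sup>2 + b\<^sup>2"
proof -
  have "0 \<le> (\<bar>a\<bar> - \<bar>b\<bar>)^2" by simp
  then have "2 * (\<bar>a\<bar> * \<bar>b\<bar>) \<le> \<bar>a\<bar>^2 + \<bar>b\<bar>^2" by (simp add: power2_eq_square algebra_simps)
  moreover have "0 \<le> \<bar>a\<bar> * \<bar>b\<bar>" by simp
  ultimately show ?thesis by (simp only: abs_mult power2_abs)
qed

lemma (in prob_space) var_sum_bound:
  fixes X :: "nat \<Rightarrow> 'a \<Rightarrow> real" and B :: real
  assumes meas: "\<And>t. t \<ge> 1 \<Longrightarrow> X t \<in> borel_measurable M"
  and sq_int: "\<And>t. t \<ge> 1 \<Longrightarrow> integrable M (\<lambda>\<omega>. (X t \<omega>)\<^sup>2)"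
  and bnd: "\<And>t. t \<ge> 1 \<Longrightarrow> expectation (\<lambda>\<omega>. (X t \<omega>)\<^sup>2) \<le> B"
  and unc: "\<And>s t. s \<ge> 1 \<Longrightarrow> t \<ge> 1 \<Longrightarrow> s \<noteq> t \<Longrightarrow>
      expectation (\<lambda>\<omega>. X s \<omega> * X t \<omega>) = expectation (X s) * expectation (X t)"
  shows "integrable M (\<lambda>\<omega>. (\<Sum>t\<in>{1..T}. X t \<omega> - expectation (X t))\<^sup>2) \<and>
         expectation (\<lambda>\<omega>. (\<Sum>t\<in>{1..T}. X t \<omega> - expectation (X t))\<^sup>2) \<le> real T * B"
proof -
  define \<mu> where "\<mu> t = expectation (X t)" for t
  have intX: "integrable M (X t)" if "t \<ge> 1" for t
    using square_integrable_imp_integrable[OF meas sq_int] that by blast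
  have intP: "integrable M (\<lambda>\<omega>. X s \<omega> * X t \<omega>)" if "s \<ge> 1" "t \<ge> 1" for s t
  proof (rule Bochner_Integration.integrable_bound[where f="\<lambda>\<omega>. (X s \<omega>)\<^sup>2 + (X t \<omega>)\<^sup>2"])
    show "integrable M (\<lambda>\<omega>. (X s \<omega>)\<^sup>2 + (X t \<omega>)\<^sup>2)" using sq_int that by auto
    show "(\<lambda>\<omega>. X s \<omega> * X t \<omega>) \<in> borel_measurable M" using meas that by auto
    show "AE \<omega> in M. norm (X s \<omega> * X t \<omega>) \<le> norm ((X s \<omega>)\<^sup>2 + (X t \<omega>)\<^sup>2)"
    proof (rule AE_I2)
      fix \<omega>
      have "\<bar>X s \<omega> * X t \<omega>\<bar> \<le> (X s \<omega>)\<^sup>2 + (X t \<omega>)\<^sup>2"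
        by (rule absprod_le)
      then show "norm (X s \<omega> * X t \<omega>) \<le> norm ((X s \<omega>)\<^sup>2 + (X t \<omega>)\<^sup>2)" by simp
    qed
  qed
  have intA: "integrable M (\<lambda>\<omega>. (X s \<omega> - \<mu> s) * (X t \<omega> - \<mu> t))" if "s \<ge> 1" "t \<ge> 1" for s t
  proof -
    have e: "(\<lambda>\<omega>. (X s \<omega> - \<mu> s) * (X t \<omega> - \<mu> t)) =
       (\<lambda>\<omega>. X s \<omega> * X t \<omega> - \<mu> t * X s \<omega> - \<mu> s * X t \<omega> + \<mu> s * \<mu> t)"
      by (auto simp: algebra_simps)
    show ?thesis unfolding e using intP[OF that] intX that by auto
  qed
  have EA: "expectation (\<lambda>\<omega>. (X s \<omega> - \<mu> s) * (X t \<omega> - \<mu> t)) =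
        expectation (\<lambda>\<omega>. X s \<omega> * X t \<omega>) - \<mu> s * \<mu> t" if "s \<ge> 1" "t \<ge> 1" for s t
  proof -
    have e: "(\<lambda>\<omega>. (X s \<omega> - \<mu> s) * (X t \<omega> - \<mu> t)) =
       (\<lambda>\<omega>. (X s \<omega> * X t \<omega> - \<mu> t * X s \<omega>) - (\<mu> s * X t \<omega> - \<mu> s * \<mu> t))"
      by (auto simp: algebra_simps)
    have "expectation (\<lambda>\<omega>. (X s \<omega> * X t \<omega> - \<mu> t * X s \<omega>) - (\<mu> s * X t \<omega> - \<mu> s * \<mu> t))
       = (expectation (\<lambda>\<omega>. X s \<omega> * X t \<omega>) - \<mu> t * \<mu> s) - (\<mu> s * \<mu> t - \<mu> s * \<mu> t)"
      using intP[OF that] intX that by (simp add: \<mu>_def prob_space)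
    then show ?thesis unfolding e by (simp add: mult.commute)
  qed
  have sq: "(\<Sum>t\<in>{1..T}. X t \<omega> - \<mu> t)\<^sup>2 = (\<Sum>s\<in>{1..T}. \<Sum>t\<in>{1..T}. (X s \<omega> - \<mu> s) * (X t \<omega> - \<mu> t))" for \<omega>
    by (simp add: power2_eq_square sum_product)
  have int: "integrable M (\<lambda>\<omega>. (\<Sum>t\<in>{1..T}. X t \<omega> - \<mu> t)\<^sup>2)"
    unfolding sq using intA by (auto intro!: Bochner_Integration.integrable_sum)
  have "expectation (\<lambda>\<omega>. (\<Sum>t\<in>{1..T}. X t \<omega> - \<mu> t)\<^sup>2) =
     (\<Sum>s\<in>{1..T}. \<Sum>t\<in>{1..T}. expectation (\<lambda>\<omega>. (X s \<omega> - \<mu> s) * (X t \<omega> - \<mu> t)))"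
    unfolding sq using intA
    by (subst Bochner_Integration.integral_sum, auto intro!: Bochner_Integration.integrable_sum sum.cong
        Bochner_Integration.integral_sum)
  also have "\<dots> = (\<Sum>s\<in>{1..T}. expectation (\<lambda>\<omega>. (X s \<omega> - \<mu> s) * (X s \<omega> - \<mu> s)))"
  proof (rule sum.cong[OF refl])
    fix s assume s: "s \<in> {1..T}"
    have "(\<Sum>t\<in>{1..T}. expectation (\<lambda>\<omega>. (X s \<omega> - \<mu> s) * (X t \<omega> - \<mu> t)))
        = (\<Sum>t\<in>{1..T}. if t = s then expectation (\<lambda>\<omega>. (X s \<omega> - \<mu> s) * (X s \<omega> - \<mu> s)) else 0)"
    proof (rule sum.cong[OF refl])
      fix t assume t: "t \<in> {1..T}"
      show "expectation (\<lambda>\<omega>. (X s \<omega> - \<mu> s) * (X t \<omega> - \<mu> t)) =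
          (if t = s then expectation (\<lambda>\<omega>. (X s \<omega> - \<mu> s) * (X s \<omega> - \<mu> s)) else 0)"
      proof (cases "t = s")
        case False
        then show ?thesis using EA[of s t] unc[of s t] s t by (simp add: \<mu>_def)
      qed simp
    qed
    also have "\<dots> = expectation (\<lambda>\<omega>. (X s \<omega> - \<mu> s) * (X s \<omega> - \<mu> s))"
      using s by (simp add: sum.delta')
    finally show "(\<Sum>t\<in>{1..T}. expectation (\<lambda>\<omega>. (X s \<omega> - \<mu> s) * (X t \<omega> - \<mu> t))) = \<dots>" .
  qed
  also have "\<dots> \<le> (\<Sum>s\<in>{1..T}. B)"
  proof (rule sum_mono)
    fix s assume s: "s \<in> {1..T}"
    have "expectation (\<lambda>\<omega>. (X s \<omega> - \<mu> s) * (X s \<omega> - \<mu> s)) = expectation (\<lambda>\<omega>. X s \<omega> * X s \<omega>) - \<mu> s * \<mu> s"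
      using s EA by auto
    also have "\<dots> \<le> B" using bnd[of s] s by (simp add: power2_eq_square) (smt (verit) zero_le_square)
    finally show "expectation (\<lambda>\<omega>. (X s \<omega> - \<mu> s) * (X s \<omega> - \<mu> s)) \<le> B" .
  qed
  finally show ?thesis using int by (simp add: \<mu>_def)
qed


lemma sq_exists: "\<exists>n::nat. n\<^sup>2 \<le> T \<and> T < (Suc n)\<^sup>2"
proof (induction T)
  case 0 then show ?case by (intro exI[of _ 0]) simp
next
  case (Suc T)
  then obtain n where n: "n\<^sup>2 \<le> T" "T < (Suc n)\<^sup>2" by blast
  show ?case
  proof (cases "Suc T < (Suc n)\<^sup>2")
    case True then show ?thesis using n by (intro exI[of _ n]) simp
  next
    case False
    then have "Suc T = (Suc n)\<^sup>2" using n by simp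
    then show ?thesis by (intro exI[of _ "Suc n"]) (simp add: power2_eq_square)
  qed
qed

lemma summable_inv_sq: "summable (\<lambda>k::nat. c / (real (Suc k))\<^sup>2)"
proof -
  have "summable (\<lambda>n::nat. inverse (real n ^ 2))" by (rule inverse_power_summable) simp
  then have "summable (\<lambda>k::nat. inverse (real (Suc k) ^ 2))"
    by (subst summable_Suc_iff)
  then have "summable (\<lambda>k::nat. c * inverse (real (Suc k) ^ 2))" by (rule summable_mult)
  then show ?thesis by (simp add: divide_inverse)
qed

lemma (in prob_space) slln_squares:
  fixes S :: "nat \<Rightarrow> 'a \<Rightarrow> real" and B :: real
  assumes meas: "\<And>T. S T \<in> borel_measurable M"
  and int: "\<And>T. integrable M (\<lambda>\<omega>. (S T \<omega>)\<^sup>2)"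
  and bnd: "\<And>T. expectation (\<lambda>\<omega>. (S T \<omega>)\<^sup>2) \<le> real T * B"
  shows "AE \<omega> in M. \<forall>j::nat. eventually (\<lambda>k. \<bar>S ((Suc k)\<^sup>2) \<omega>\<bar> < (Suc k)\<^sup>2 / real (Suc j)) sequentially"
proof (subst AE_all_countable, intro allI)
  fix j :: nat
  define \<epsilon> where "\<epsilon> = 1 / real (Suc j)"
  have \<epsilon>: "\<epsilon> > 0" by (simp add: \<epsilon>_def)
  define A where "A k = {\<omega>\<in>space M. \<epsilon> * real ((Suc k)\<^sup>2) \<le> \<bar>S ((Suc k)\<^sup>2) \<omega>\<bar>}" for k
  have Ameas: "A k \<in> sets M" for k unfolding A_def using meas by measurable
  have Abnd: "measure M (A k) \<le> B / \<epsilon>\<^sup>2 / (real (Suc k))\<^sup>2" for k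
  proof -
    let ?T = "(Suc k)\<^sup>2"
    have "measure M (A k) = measure M {\<omega>\<in>space M. (\<epsilon> * real ?T)\<^sup>2 \<le> (S ?T \<omega>)\<^sup>2}"
    proof -
      have "(\<epsilon> * real ?T \<le> \<bar>S ?T \<omega>\<bar>) = ((\<epsilon> * real ?T)\<^sup>2 \<le> (S ?T \<omega>)\<^sup>2)" for \<omega>
        using \<epsilon> by (metis abs_le_square_iff abs_of_nonneg mult_nonneg_nonneg of_nat_0_le_iff less_imp_le)
      then show ?thesis unfolding A_def by simp
    qed
    also have "\<dots> \<le> expectation (\<lambda>\<omega>. (S ?T \<omega>)\<^sup>2) / (\<epsilon> * real ?T)\<^sup>2"
      using integral_Markov_inequality_measure[where M=M and u="\<lambda>\<omega>. (S ?T \<omega>)\<^sup>2" and c="(\<epsilon> * real ?T)\<^sup>2" and A="space M"] int \<epsilon>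
      by auto
    also have "\<dots> \<le> (real ?T * B) / (\<epsilon> * real ?T)\<^sup>2"
      using bnd[of ?T] \<epsilon> by (intro divide_right_mono) auto
    also have "\<dots> = B / \<epsilon>\<^sup>2 / (real (Suc k))\<^sup>2"
    proof -
      define r where "r = real (Suc k)"
      have r: "r > 0" "real ?T = r\<^sup>2" unfolding r_def by simp_all
      show ?thesis unfolding r(2) r_def[symmetric] using r(1) \<epsilon>
        by (simp add: field_simps power2_eq_square)
    qed
    finally show ?thesis .
  qed
  have "summable (\<lambda>k. measure M (A k))"
    by (rule summable_comparison_test[OF _ summable_inv_sq[of "B / \<epsilon>\<^sup>2"]])
       (use Abnd in auto)
  then have "AE \<omega> in M. eventually (\<lambda>k. \<omega> \<in> space M - A k) sequentially"
    by (intro borel_cantelli_AE1) (auto simp: Ameas less_top[symmetric])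
  then show "AE \<omega> in M. eventually (\<lambda>k. \<bar>S ((Suc k)\<^sup>2) \<omega>\<bar> < (Suc k)\<^sup>2 / real (Suc j)) sequentially"
  proof (rule AE_mp[OF _ AE_I2], intro impI)
    fix \<omega> assume w: "\<omega> \<in> space M" and ev: "eventually (\<lambda>k. \<omega> \<in> space M - A k) sequentially"
    show "eventually (\<lambda>k. \<bar>S ((Suc k)\<^sup>2) \<omega>\<bar> < (Suc k)\<^sup>2 / real (Suc j)) sequentially"
      using ev
    proof (rule eventually_mono)
      fix k assume "\<omega> \<in> space M - A k"
      then have "\<not> \<epsilon> * real ((Suc k)\<^sup>2) \<le> \<bar>S ((Suc k)\<^sup>2) \<omega>\<bar>" using w by (auto simp: A_def)
      then show "\<bar>S ((Suc k)\<^sup>2) \<omega>\<bar> < (Suc k)\<^sup>2 / real (Suc j)"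
        by (simp add: \<epsilon>_def)
    qed
  qed
qed


lemma psum_diff:
  fixes f :: "nat \<Rightarrow> real"
  assumes "a \<le> b"
  shows "(\<Sum>t\<in>{1..b}. f t) - (\<Sum>t\<in>{1..a}. f t) = (\<Sum>t\<in>{Suc a..b}. f t)"
proof -
  have "{1..b} = {1..a} \<union> {Suc a..b}" using assms by auto
  then have "(\<Sum>t\<in>{1..b}. f t) = (\<Sum>t\<in>{1..a}. f t) + (\<Sum>t\<in>{Suc a..b}. f t)"
    by (simp add: sum.union_disjoint ivl_disj_int)
  then show ?thesis by simp
qed

lemma psum_mono:
  fixes f :: "nat \<Rightarrow> real"
  assumes "a \<le> b" "\<And>t. t \<ge> 1 \<Longrightarrow> 0 \<le> f t"
  shows "(\<Sum>t\<in>{1..a}. f t) \<le> (\<Sum>t\<in>{1..b}. f t)"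
proof -
  have "0 \<le> (\<Sum>t\<in>{Suc a..b}. f t)" using assms(2) by (intro sum_nonneg) auto
  then show ?thesis using psum_diff[OF assms(1), of f] by simp
qed

lemma psum_diff_le:
  fixes f :: "nat \<Rightarrow> real"
  assumes "a \<le> b" "\<And>t. t \<ge> 1 \<Longrightarrow> f t \<le> C"
  shows "(\<Sum>t\<in>{1..b}. f t) - (\<Sum>t\<in>{1..a}. f t) \<le> real (b - a) * C"
proof -
  have "(\<Sum>t\<in>{Suc a..b}. f t) \<le> real (card {Suc a..b}) * C"
    using assms(2) by (intro sum_bounded_above) auto
  then show ?thesis using psum_diff[OF assms(1), of f] by simp
qed

lemma det_sandwich:
  fixes x \<mu> :: "nat \<Rightarrow> real" and C :: real
  assumes xnn: "\<And>t. t \<ge> 1 \<Longrightarrow> 0 \<le> x t" and mnn: "\<And>t. t \<ge> 1 \<Longrightarrow> 0 \<le> \<mu> t"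
    and mC: "\<And>t. t \<ge> 1 \<Longrightarrow> \<mu> t \<le> C"
    and ev: "\<And>j. eventually (\<lambda>k. \<bar>\<Sum>t\<in>{1..(Suc k)\<^sup>2}. x t - \<mu> t\<bar> < (Suc k)\<^sup>2 / real (Suc j)) sequentially"
  shows "(\<lambda>T. (\<Sum>t\<in>{1..T}. x t - \<mu> t) / real T) \<longlonglongrightarrow> 0"
proof (rule LIMSEQ_I)
  fix r :: real assume r: "r > 0"
  define S where "S T = (\<Sum>t\<in>{1..T}. x t - \<mu> t)" for T
  define P where "P T = (\<Sum>t\<in>{1..T}. x t)" for T
  define m where "m T = (\<Sum>t\<in>{1..T}. \<mu> t)" for T
  have SPm: "S T = P T - m T" for T unfolding S_def P_def m_def by (simp add: sum_subtractf)
  have C0: "C \<ge> 0" using mnn[of 1] mC[of 1] by simp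
  obtain j :: nat where j: "1 / real (Suc j) < r / 8"
    using reals_Archimedean[of "r / 8"] r by (auto simp: inverse_eq_divide)
  define e where "e = 1 / real (Suc j)"
  have e0: "e > 0" and er: "e < r / 8" using j by (auto simp: e_def)
  obtain k0 where k0: "\<And>k. k \<ge> k0 \<Longrightarrow> \<bar>S ((Suc k)\<^sup>2)\<bar> < (Suc k)\<^sup>2 * e"
    using ev[of j] unfolding eventually_sequentially S_def e_def by (auto simp: divide_inverse)
  obtain n1 :: nat where n1: "6 * C / r < real n1" using reals_Archimedean2 by blast
  define N0 where "N0 = max (k0 + 1) (n1 + 1)"
  show "\<exists>no. \<forall>T\<ge>no. norm ((\<Sum>t\<in>{1..T}. x t - \<mu> t) / real T - 0) < r"
  proof (intro exI allI impI)
    fix T assume T: "T \<ge> N0\<^sup>2"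
    obtain n where n: "n\<^sup>2 \<le> T" "T < (Suc n)\<^sup>2" using sq_exists by blast
    have nN0: "n \<ge> N0"
    proof (rule ccontr)
      assume "\<not> n \<ge> N0"
      then have "Suc n \<le> N0" by simp
      then have "(Suc n)\<^sup>2 \<le> N0\<^sup>2" by (rule power_mono) simp
      then show False using T n by linarith
    qed
    then have n1le: "n \<ge> 1" "n \<ge> n1 + 1" "n - 1 \<ge> k0" "n \<ge> k0" by (auto simp: N0_def)
    have Sn: "\<bar>S (n\<^sup>2)\<bar> < n\<^sup>2 * e"
      using k0[of "n - 1"] n1le by (simp add: Suc_diff_1)
    have Sn1: "\<bar>S ((Suc n)\<^sup>2)\<bar> < (Suc n)\<^sup>2 * e" using k0[of n] n1le by simp
    have le1: "n\<^sup>2 \<le> (Suc n)\<^sup>2" by (simp add: power_mono)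
    have PT1: "P T \<le> P ((Suc n)\<^sup>2)" unfolding P_def using n xnn by (intro psum_mono) auto
    have PT2: "P (n\<^sup>2) \<le> P T" unfolding P_def using n xnn by (intro psum_mono) auto
    have mT1: "m T \<le> m ((Suc n)\<^sup>2)" unfolding m_def using n mnn by (intro psum_mono) auto
    have mT2: "m (n\<^sup>2) \<le> m T" unfolding m_def using n mnn by (intro psum_mono) auto
    have D: "m ((Suc n)\<^sup>2) - m (n\<^sup>2) \<le> real ((Suc n)\<^sup>2 - n\<^sup>2) * C"
      unfolding m_def using le1 mC by (intro psum_diff_le) auto
    have cd: "real ((Suc n)\<^sup>2 - n\<^sup>2) = 2 * real n + 1"
      using le1 by (simp add: of_nat_diff power2_eq_square algebra_simps)
    have up: "S T \<le> (Suc n)\<^sup>2 * e + (2 * real n + 1) * C"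
      using SPm[of T] SPm[of "(Suc n)\<^sup>2"] PT1 mT2 D cd Sn1 by (simp add: abs_less_iff)
    have lo: "S T \<ge> - (n\<^sup>2 * e) - (2 * real n + 1) * C"
      using SPm[of T] SPm[of "n\<^sup>2"] PT2 mT1 D cd Sn by (simp add: abs_less_iff)
    have nn: "(real n)\<^sup>2 * e \<le> (real (Suc n))\<^sup>2 * e" using e0 le1
      by (intro mult_right_mono) (simp_all add: power_mono)
    have absS: "\<bar>S T\<bar> \<le> (real (Suc n))\<^sup>2 * e + (2 * real n + 1) * C"
      using up lo nn by (simp add: abs_le_iff; linarith)
    have rn: "real n \<ge> 1" using n1le by simp
    have Tpos: "real T \<ge> (real n)\<^sup>2" using n(1) by (metis of_nat_le_iff of_nat_power)
    have npos: "(real n)\<^sup>2 > 0" using rn by simp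
    have b1: "(real (Suc n))\<^sup>2 \<le> 4 * (real n)\<^sup>2"
    proof -
      have "real n * (3 * real n) \<ge> 1 * (3 * real n)" using rn by (intro mult_right_mono) auto
      moreover have "(real (Suc n))\<^sup>2 = (real n)\<^sup>2 + 2*real n + 1" by (simp add: power2_eq_square algebra_simps)
      moreover have "real n * (3 * real n) = 3 * (real n)\<^sup>2" by (simp add: power2_eq_square)
      ultimately show ?thesis using rn by linarith
    qed
    have b2: "2 * real n + 1 \<le> 3 * real n" using rn by simp
    have "\<bar>S T\<bar> \<le> 4 * (real n)\<^sup>2 * e + 3 * real n * C"
      using absS b1 b2 e0 C0 mult_right_mono[OF b1, of e] mult_right_mono[OF b2, of C] by linarith
    also have "\<dots> < (real n)\<^sup>2 * r"
    proof -
      have "6 * C < r * real n" using n1 n1le r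
        by (smt (verit, ccfv_SIG) divide_less_eq of_nat_1 of_nat_add of_nat_le_iff mult.commute)
      then have "3 * real n * C < (real n)\<^sup>2 * (r / 2)" using rn by (simp add: power2_eq_square algebra_simps)
      moreover have "4 * (real n)\<^sup>2 * e < (real n)\<^sup>2 * (r / 2)" using er npos by simp
      ultimately show ?thesis by simp
    qed
    also have "\<dots> \<le> real T * r" using Tpos r by (simp add: mult_right_mono)
    finally have "\<bar>S T\<bar> < real T * r" .
    moreover have "real T > 0" using Tpos npos by linarith
    ultimately show "norm ((\<Sum>t\<in>{1..T}. x t - \<mu> t) / real T - 0) < r"
      by (simp add: S_def abs_divide divide_less_eq mult.commute)
  qed
qed


lemma (in prob_space) slln_nonneg:
  fixes X :: "nat \<Rightarrow> 'a \<Rightarrow> real" and B :: real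
  assumes meas: "\<And>t. t \<ge> 1 \<Longrightarrow> X t \<in> borel_measurable M"
  and nonneg: "\<And>t \<omega>. t \<ge> 1 \<Longrightarrow> 0 \<le> X t \<omega>"
  and sq_int: "\<And>t. t \<ge> 1 \<Longrightarrow> integrable M (\<lambda>\<omega>. (X t \<omega>)\<^sup>2)"
  and bnd: "\<And>t. t \<ge> 1 \<Longrightarrow> expectation (\<lambda>\<omega>. (X t \<omega>)\<^sup>2) \<le> B"
  and unc: "\<And>s t. s \<ge> 1 \<Longrightarrow> t \<ge> 1 \<Longrightarrow> s \<noteq> t \<Longrightarrow>
      expectation (\<lambda>\<omega>. X s \<omega> * X t \<omega>) = expectation (X s) * expectation (X t)"
  shows "AE \<omega> in M. (\<lambda>T. (\<Sum>t\<in>{1..T}. X t \<omega> - expectation (X t)) / real T) \<longlonglongrightarrow> 0"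
proof -
  define S where "S T \<omega> = (\<Sum>t\<in>{1..T}. X t \<omega> - expectation (X t))" for T \<omega>
  have Smeas: "S T \<in> borel_measurable M" for T
    unfolding S_def using meas by (intro borel_measurable_sum) auto
  have vb: "integrable M (\<lambda>\<omega>. (S T \<omega>)\<^sup>2) \<and> expectation (\<lambda>\<omega>. (S T \<omega>)\<^sup>2) \<le> real T * B" for T
    unfolding S_def by (rule var_sum_bound[OF meas sq_int bnd unc])
  have ae: "AE \<omega> in M. \<forall>j::nat. eventually (\<lambda>k. \<bar>S ((Suc k)\<^sup>2) \<omega>\<bar> < (Suc k)\<^sup>2 / real (Suc j)) sequentially"
    by (rule slln_squares[OF Smeas]) (use vb in auto)
  have intX: "integrable M (X t)" if "t \<ge> 1" for t
    using square_integrable_imp_integrable[OF meas sq_int] that by blast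
  have mnn: "0 \<le> expectation (X t)" if "t \<ge> 1" for t
    using nonneg that by (intro integral_nonneg_AE) auto
  have mC: "expectation (X t) \<le> 1 + B" if t: "t \<ge> 1" for t
  proof -
    have "expectation (X t) \<le> expectation (\<lambda>\<omega>. 1 + (X t \<omega>)\<^sup>2)"
    proof (rule integral_mono)
      show "integrable M (X t)" using intX t .
      show "integrable M (\<lambda>\<omega>. 1 + (X t \<omega>)\<^sup>2)" using sq_int t by auto
      fix \<omega>
      have "0 \<le> (X t \<omega> - 1)\<^sup>2" by simp
      moreover have "(X t \<omega> - 1)\<^sup>2 = (X t \<omega>)\<^sup>2 - 2 * X t \<omega> + 1" by (simp add: power2_eq_square algebra_simps)
      moreover have "0 \<le> X t \<omega>" using nonneg t by simp
      ultimately show "X t \<omega> \<le> 1 + (X t \<omega>)\<^sup>2" by linarith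
    qed
    also have "\<dots> = 1 + expectation (\<lambda>\<omega>. (X t \<omega>)\<^sup>2)" using sq_int t by (simp add: prob_space)
    finally show ?thesis using bnd[OF t] by linarith
  qed
  show ?thesis
  proof (rule AE_mp[OF ae AE_I2], intro impI)
    fix \<omega> assume "\<omega> \<in> space M"
      and ev: "\<forall>j::nat. eventually (\<lambda>k. \<bar>S ((Suc k)\<^sup>2) \<omega>\<bar> < (Suc k)\<^sup>2 / real (Suc j)) sequentially"
    show "(\<lambda>T. (\<Sum>t\<in>{1..T}. X t \<omega> - expectation (X t)) / real T) \<longlonglongrightarrow> 0"
      by (rule det_sandwich[where C="1 + B"]) (use nonneg mnn mC ev in \<open>auto simp: S_def\<close>)
  qed
qed


lemma (in prob_space) gauss_moments:
  assumes \<sigma>: "\<sigma> > 0" and Yd: "distributed M lborel Y (\<lambda>y. ennreal (normal_density 0 \<sigma> y))"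
  shows "integrable M (\<lambda>\<omega>. (Y \<omega>)^k)"
    and "expectation (\<lambda>\<omega>. (Y \<omega>)^k) = (\<integral>y. normal_density 0 \<sigma> y * y^k \<partial>lborel)"
proof -
  have il: "integrable lborel (\<lambda>y. normal_density 0 \<sigma> y * y^k)"
    using integrable_normal_moment[where \<sigma>=\<sigma> and \<mu>=0 and k=k] \<sigma> by simp
  show "integrable M (\<lambda>\<omega>. (Y \<omega>)^k)"
    using distributed_integrable[OF Yd, of "\<lambda>y. y^k"] il by simp
  show "expectation (\<lambda>\<omega>. (Y \<omega>)^k) = (\<integral>y. normal_density 0 \<sigma> y * y^k \<partial>lborel)"
    using distributed_integral[OF Yd, of "\<lambda>y. y^k"] by simp
qed

lemma (in prob_space) gauss_mean_var:
  assumes \<sigma>: "\<sigma> > 0" and Yd: "distributed M lborel Y (\<lambda>y. ennreal (normal_density 0 \<sigma> y))"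
  shows "expectation Y = 0" and "expectation (\<lambda>\<omega>. (Y \<omega>)\<^sup>2) = \<sigma>\<^sup>2"
proof -
  show e: "expectation Y = 0" using normal_distributed_expectation[OF \<sigma> Yd] .
  have "variance Y = \<sigma>\<^sup>2" using normal_distributed_variance[OF \<sigma> Yd] .
  then show "expectation (\<lambda>\<omega>. (Y \<omega>)\<^sup>2) = \<sigma>\<^sup>2" using e by simp
qed

lemma (in prob_space) main_limits:
  fixes Y D :: "nat \<Rightarrow> 'a \<Rightarrow> real" and \<sigma> Bd :: real
  assumes Ym: "\<And>t. t \<ge> 1 \<Longrightarrow> Y t \<in> borel_measurable M"
   and Dm: "\<And>t. t \<ge> 1 \<Longrightarrow> D t \<in> borel_measurable M"
   and \<sigma>: "\<sigma> > 0"
   and Yd: "\<And>t. t \<ge> 1 \<Longrightarrow> distributed M lborel (Y t) (\<lambda>y. ennreal (normal_density 0 \<sigma> y))"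
   and YD: "\<And>t. t \<ge> 1 \<Longrightarrow> indep_var borel (Y t) borel (D t)"
   and pw: "\<And>s t F1 F2. s \<ge> 1 \<Longrightarrow> t \<ge> 1 \<Longrightarrow> s \<noteq> t \<Longrightarrow>
        F1 \<in> borel_measurable (borel \<Otimes>\<^sub>M borel) \<Longrightarrow> F2 \<in> borel_measurable (borel \<Otimes>\<^sub>M borel) \<Longrightarrow>
        indep_var borel (\<lambda>\<omega>. F1 (Y s \<omega>, D s \<omega>)) borel (\<lambda>\<omega>. (F2 (Y t \<omega>, D t \<omega>) :: real))"
   and D2: "\<And>t. t \<ge> 1 \<Longrightarrow> integrable M (\<lambda>\<omega>. (D t \<omega>)\<^sup>2)"
   and D2b: "\<And>t. t \<ge> 1 \<Longrightarrow> expectation (\<lambda>\<omega>. (D t \<omega>)\<^sup>2) \<le> Bd"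
  shows "AE \<omega> in M. (\<lambda>T. (\<Sum>t\<in>{1..T}. (Y t \<omega>)\<^sup>2) / real T) \<longlonglongrightarrow> \<sigma>\<^sup>2 \<and>
                    (\<lambda>T. (\<Sum>t\<in>{1..T}. Y t \<omega> * D t \<omega>) / real T) \<longlonglongrightarrow> 0"
proof -
  have Yk: "integrable M (\<lambda>\<omega>. (Y t \<omega>)^k)" if "t \<ge> 1" for t k
    using gauss_moments(1)[OF \<sigma> Yd[OF that]] .
  have EY: "expectation (Y t) = 0" and EY2: "expectation (\<lambda>\<omega>. (Y t \<omega>)\<^sup>2) = \<sigma>\<^sup>2" if "t \<ge> 1" for t
    using gauss_mean_var[OF \<sigma> Yd[OF that]] by auto
  have EY4: "expectation (\<lambda>\<omega>. (Y t \<omega>)^4) = (\<integral>y. normal_density 0 \<sigma> y * y^4 \<partial>lborel)" if "t \<ge> 1" for t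
    using gauss_moments(2)[OF \<sigma> Yd[OF that]] .
  have intD: "integrable M (D t)" if "t \<ge> 1" for t
    using square_integrable_imp_integrable[OF Dm[OF that] D2[OF that]] .
  have intY: "integrable M (Y t)" if "t \<ge> 1" for t using Yk[OF that, of 1] by simp
  have Y2int: "integrable M (\<lambda>\<omega>. (Y t \<omega>)\<^sup>2)" if "t \<ge> 1" for t using Yk[OF that, of 2] .
  have fst_m: "(\<lambda>z::real\<times>real. f (fst z)) \<in> borel_measurable (borel \<Otimes>\<^sub>M borel)"
    if "f \<in> borel_measurable borel" for f :: "real \<Rightarrow> real" using that by measurable
  have A1: "AE \<omega> in M. (\<lambda>T. (\<Sum>t\<in>{1..T}. (Y t \<omega>)\<^sup>2 - expectation (\<lambda>\<omega>. (Y t \<omega>)\<^sup>2)) / real T) \<longlonglongrightarrow> 0"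
  proof (rule slln_nonneg[where B="\<integral>y. normal_density 0 \<sigma> y * y^4 \<partial>lborel"])
    show "(\<lambda>\<omega>. (Y t \<omega>)\<^sup>2) \<in> borel_measurable M" if "t \<ge> 1" for t using Ym[OF that] by measurable
    show "0 \<le> (Y t \<omega>)\<^sup>2" for t \<omega> by simp
    show "integrable M (\<lambda>\<omega>. ((Y t \<omega>)\<^sup>2)\<^sup>2)" if "t \<ge> 1" for t
      using Yk[OF that, of 4] by (simp add: power_mult[symmetric])
    show "expectation (\<lambda>\<omega>. ((Y t \<omega>)\<^sup>2)\<^sup>2) \<le> (\<integral>y. normal_density 0 \<sigma> y * y^4 \<partial>lborel)" if "t \<ge> 1" for t
      using EY4[OF that] by (simp add: power_mult[symmetric])
    fix s t :: nat assume st: "s \<ge> 1" "t \<ge> 1" "s \<noteq> t"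
    have "indep_var borel (\<lambda>\<omega>. (\<lambda>z. (fst z)\<^sup>2) (Y s \<omega>, D s \<omega>)) borel (\<lambda>\<omega>. (\<lambda>z. (fst z)\<^sup>2) (Y t \<omega>, D t \<omega>))"
      by (rule pw[OF st]) (rule fst_m, measurable)+
    then have "indep_var borel (\<lambda>\<omega>. (Y s \<omega>)\<^sup>2) borel (\<lambda>\<omega>. (Y t \<omega>)\<^sup>2)" by simp
    then show "expectation (\<lambda>\<omega>. (Y s \<omega>)\<^sup>2 * (Y t \<omega>)\<^sup>2) =
        expectation (\<lambda>\<omega>. (Y s \<omega>)\<^sup>2) * expectation (\<lambda>\<omega>. (Y t \<omega>)\<^sup>2)"
      by (rule indep_var_lebesgue_integral) (use Y2int st in auto)
  qed
  have L1: "(\<lambda>T. (\<Sum>t\<in>{1..T}. (Y t \<omega>)\<^sup>2) / real T) \<longlonglongrightarrow> \<sigma>\<^sup>2"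
    if h: "(\<lambda>T. (\<Sum>t\<in>{1..T}. (Y t \<omega>)\<^sup>2 - expectation (\<lambda>\<omega>. (Y t \<omega>)\<^sup>2)) / real T) \<longlonglongrightarrow> 0" for \<omega>
  proof -
    have h': "(\<lambda>T. (\<Sum>t\<in>{1..T}. (Y t \<omega>)\<^sup>2 - \<sigma>\<^sup>2) / real T) \<longlonglongrightarrow> 0"
    proof -
      have "(\<Sum>t\<in>{1..T}. (Y t \<omega>)\<^sup>2 - expectation (\<lambda>\<omega>. (Y t \<omega>)\<^sup>2)) = (\<Sum>t\<in>{1..T}. (Y t \<omega>)\<^sup>2 - \<sigma>\<^sup>2)" for T
        by (intro sum.cong refl) (auto simp: EY2)
      then show ?thesis using h by simp
    qed
    have "(\<lambda>T. (\<Sum>t\<in>{1..T}. (Y t \<omega>)\<^sup>2 - \<sigma>\<^sup>2) / real T + \<sigma>\<^sup>2) \<longlonglongrightarrow> 0 + \<sigma>\<^sup>2"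
      by (intro tendsto_add h' tendsto_const)
    moreover have "eventually (\<lambda>T. (\<Sum>t\<in>{1..T}. (Y t \<omega>)\<^sup>2 - \<sigma>\<^sup>2) / real T + \<sigma>\<^sup>2 =
                       (\<Sum>t\<in>{1..T}. (Y t \<omega>)\<^sup>2) / real T) sequentially"
      using eventually_ge_at_top[of 1]
      by eventually_elim (simp add: sum_subtractf field_simps)
    ultimately show ?thesis by (simp add: Lim_transform_eventually)
  qed
  define Zp where "Zp t \<omega> = max 0 (Y t \<omega> * D t \<omega>)" for t \<omega>
  define Zn where "Zn t \<omega> = max 0 (- (Y t \<omega> * D t \<omega>))" for t \<omega>
  have Y2D2: "indep_var borel (\<lambda>\<omega>. (Y t \<omega>)\<^sup>2) borel (\<lambda>\<omega>. (D t \<omega>)\<^sup>2)" if "t \<ge> 1" for t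
  proof -
    have "indep_var borel ((\<lambda>x. x\<^sup>2) \<circ> Y t) borel ((\<lambda>x. x\<^sup>2) \<circ> D t)"
      by (rule indep_var_compose[OF YD[OF that]]) measurable
    then show ?thesis by (simp add: comp_def)
  qed
  have Z2int: "integrable M (\<lambda>\<omega>. (Y t \<omega> * D t \<omega>)\<^sup>2)" if "t \<ge> 1" for t
    using indep_var_integrable[OF Y2D2[OF that] Y2int[OF that] D2[OF that]] by (simp add: power_mult_distrib)
  have EZ2: "expectation (\<lambda>\<omega>. (Y t \<omega> * D t \<omega>)\<^sup>2) \<le> \<sigma>\<^sup>2 * Bd" if "t \<ge> 1" for t
  proof -
    have "expectation (\<lambda>\<omega>. (Y t \<omega> * D t \<omega>)\<^sup>2) = expectation (\<lambda>\<omega>. (Y t \<omega>)\<^sup>2) * expectation (\<lambda>\<omega>. (D t \<omega>)\<^sup>2)"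
      using indep_var_lebesgue_integral[OF Y2D2[OF that] Y2int[OF that] D2[OF that]] by (simp add: power_mult_distrib)
    also have "\<dots> \<le> \<sigma>\<^sup>2 * Bd" using EY2[OF that] D2b[OF that] by (simp add: mult_left_mono)
    finally show ?thesis .
  qed
  have EZ: "expectation (\<lambda>\<omega>. Y t \<omega> * D t \<omega>) = 0" if "t \<ge> 1" for t
    using indep_var_lebesgue_integral[OF YD[OF that] intY[OF that] intD[OF that]] EY[OF that] by simp
  have Zpm: "Zp t \<in> borel_measurable M" and Znm: "Zn t \<in> borel_measurable M" if "t \<ge> 1" for t
    unfolding Zp_def Zn_def using Ym[OF that] Dm[OF that] by measurable
  have sq_le: "(Zp t \<omega>)\<^sup>2 \<le> (Y t \<omega> * D t \<omega>)\<^sup>2" "(Zn t \<omega>)\<^sup>2 \<le> (Y t \<omega> * D t \<omega>)\<^sup>2" for t \<omega>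
    unfolding Zp_def Zn_def by (auto simp: max_def power2_eq_square)
  have Zp2: "integrable M (\<lambda>\<omega>. (Zp t \<omega>)\<^sup>2)" and Zn2: "integrable M (\<lambda>\<omega>. (Zn t \<omega>)\<^sup>2)" if "t \<ge> 1" for t
    using Z2int[OF that] sq_le Zpm[OF that] Znm[OF that]
    by (auto intro!: Bochner_Integration.integrable_bound[where f="\<lambda>\<omega>. (Y t \<omega> * D t \<omega>)\<^sup>2"])
  have EZp2: "expectation (\<lambda>\<omega>. (Zp t \<omega>)\<^sup>2) \<le> \<sigma>\<^sup>2 * Bd" and EZn2: "expectation (\<lambda>\<omega>. (Zn t \<omega>)\<^sup>2) \<le> \<sigma>\<^sup>2 * Bd"
    if "t \<ge> 1" for t
    using integral_mono[OF Zp2[OF that] Z2int[OF that] sq_le(1)] integral_mono[OF Zn2[OF that] Z2int[OF that] sq_le(2)]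
      EZ2[OF that] by auto
  have Zpi: "integrable M (Zp t)" and Zni: "integrable M (Zn t)" if "t \<ge> 1" for t
    using square_integrable_imp_integrable[OF Zpm[OF that] Zp2[OF that]]
      square_integrable_imp_integrable[OF Znm[OF that] Zn2[OF that]] by auto
  have Zdiff: "Y t \<omega> * D t \<omega> = Zp t \<omega> - Zn t \<omega>" for t \<omega> unfolding Zp_def Zn_def by (auto simp: max_def)
  have EZpn: "expectation (Zp t) = expectation (Zn t)" if "t \<ge> 1" for t
  proof -
    have "expectation (\<lambda>\<omega>. Zp t \<omega> - Zn t \<omega>) = 0" using EZ[OF that] by (simp add: Zdiff)
    then show ?thesis using Zpi[OF that] Zni[OF that] by simp
  qed
  have pwZ: "expectation (\<lambda>\<omega>. G s \<omega> * G t \<omega>) = expectation (G s) * expectation (G t)"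
    if st: "s \<ge> 1" "t \<ge> 1" "s \<noteq> t" and G: "G = Zp \<or> G = Zn" for G s t
  proof -
    obtain F where F: "F \<in> borel_measurable (borel \<Otimes>\<^sub>M borel)" "\<And>t \<omega>. G t \<omega> = F (Y t \<omega>, D t \<omega>)"
    proof (cases "G = Zp")
      case True
      show ?thesis by (rule that[of "\<lambda>z. max 0 (fst z * snd z)"]) (auto simp: True Zp_def)
    next
      case False
      then have "G = Zn" using G by simp
      show ?thesis by (rule that[of "\<lambda>z. max 0 (- (fst z * snd z))"]) (auto simp: \<open>G = Zn\<close> Zn_def)
    qed
    have "indep_var borel (\<lambda>\<omega>. F (Y s \<omega>, D s \<omega>)) borel (\<lambda>\<omega>. F (Y t \<omega>, D t \<omega>))"
      by (rule pw[OF st F(1) F(1)])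
    then have iv: "indep_var borel (G s) borel (G t)" by (simp add: F(2)[abs_def])
    have "integrable M (G s)" "integrable M (G t)" using G Zpi Zni st by auto
    then show ?thesis using indep_var_lebesgue_integral[OF iv] by simp
  qed
  have Zpnn: "0 \<le> Zp t \<omega>" "0 \<le> Zn t \<omega>" for t \<omega> by (simp_all add: Zp_def Zn_def)
  have Ap: "AE \<omega> in M. (\<lambda>T. (\<Sum>t\<in>{1..T}. Zp t \<omega> - expectation (Zp t)) / real T) \<longlonglongrightarrow> 0"
    by (rule slln_nonneg[where B="\<sigma>\<^sup>2 * Bd"]) (use Zpm Zp2 EZp2 Zpnn pwZ[OF _ _ _ disjI1[OF refl]] in auto)
  have An: "AE \<omega> in M. (\<lambda>T. (\<Sum>t\<in>{1..T}. Zn t \<omega> - expectation (Zn t)) / real T) \<longlonglongrightarrow> 0"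
    by (rule slln_nonneg[where B="\<sigma>\<^sup>2 * Bd"]) (use Znm Zn2 EZn2 Zpnn pwZ[OF _ _ _ disjI2[OF refl]] in auto)
  show ?thesis
    using A1 Ap An
  proof eventually_elim
    case (elim \<omega>)
    have "(\<lambda>T. (\<Sum>t\<in>{1..T}. Zp t \<omega> - expectation (Zp t)) / real T -
               (\<Sum>t\<in>{1..T}. Zn t \<omega> - expectation (Zn t)) / real T) \<longlonglongrightarrow> 0 - 0"
      by (intro tendsto_diff elim(2) elim(3))
    moreover have "(\<Sum>t\<in>{1..T}. Zp t \<omega> - expectation (Zp t)) / real T -
               (\<Sum>t\<in>{1..T}. Zn t \<omega> - expectation (Zn t)) / real T = (\<Sum>t\<in>{1..T}. Y t \<omega> * D t \<omega>) / real T" for T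
    proof -
      have "(\<Sum>t\<in>{1..T}. Zp t \<omega> - expectation (Zp t)) - (\<Sum>t\<in>{1..T}. Zn t \<omega> - expectation (Zn t))
          = (\<Sum>t\<in>{1..T}. (Zp t \<omega> - expectation (Zp t)) - (Zn t \<omega> - expectation (Zn t)))"
        by (simp add: sum_subtractf)
      also have "\<dots> = (\<Sum>t\<in>{1..T}. Y t \<omega> * D t \<omega>)"
        by (intro sum.cong refl) (simp add: EZpn Zdiff)
      finally show ?thesis by (simp add: diff_divide_distrib[symmetric])
    qed
    ultimately show ?case using L1[OF elim(1)] by simp
  qed
qed



lemma sum_blocks3: "(\<Sum>l<3*(M::nat). (f l :: real)) = (\<Sum>k<M. f (3*k) + f (3*k+1) + f (3*k+2))"
proof (induction M)
  case 0 then show ?case by simp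
next
  case (Suc M)
  have e: "3 * Suc M = Suc (Suc (Suc (3*M)))" by simp
  show ?case unfolding e using Suc by (simp add: add.assoc)
qed

lemma Xmat_col_sum:
  "(\<Sum>k'<M. Xmat x k' l * p k') = (if l < 3*M then x l * p (l div 3) else 0)"
proof -
  have "(\<Sum>k'<M. Xmat x k' l * p k') = (\<Sum>k'<M. if k' = l div 3 then x l * p (l div 3) else 0)"
    by (intro sum.cong refl) (auto simp: Xmat_def)
  also have "\<dots> = (if l < 3*M then x l * p (l div 3) else 0)"
    by (simp add: sum.delta' less_mult_imp_div_less) (auto dest: div_less_iff_less_mult[THEN iffD1, rotated])
  finally show ?thesis .
qed

lemma vtil_alt:
  "vtil M K L x vref p q k =
     (\<Sum>j<3*M. Xmat x k j * vref j)
   + (\<Sum>j<3*M. Xmat x k j * (\<Sum>l<3*M. K j l * (x l * p (l div 3))))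
   + (\<Sum>j<3*M. Xmat x k j * (\<Sum>l<3*M. L j l * (x l * q (l div 3))))"
  unfolding vtil_def Xmat_col_sum
  by (simp add: sum_distrib_left mult.assoc)

lemma Xmat_eq:
  assumes "\<forall>i<3. x (3*m+i) = xs (3*m+i)"
  shows "Xmat x m j = Xmat xs m j"
proof (cases "j div 3 = m")
  case True
  then have "j = 3*m + j mod 3" by (metis mult.commute div_mult_mod_eq)
  moreover have "j mod 3 < 3" by simp
  ultimately show ?thesis using assms True unfolding Xmat_def by metis
qed (simp add: Xmat_def)

lemma feasible_block: "x \<in> feasible M \<Longrightarrow> k < M \<Longrightarrow> x (3*k) + x (3*k+1) + x (3*k+2) = 1"
  by (simp add: feasible_def)

lemma row_sum_eq:
  fixes K :: "nat \<Rightarrow> nat \<Rightarrow> real"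
  assumes x: "x \<in> feasible M" and xs: "xs \<in> feasible M"
    and agree: "\<And>k. k < M \<Longrightarrow> ty k \<noteq> ThreePhase \<or> k = m \<Longrightarrow> (\<forall>i<3. x (3*k+i) = xs (3*k+i))"
    and const: "\<And>k b. k < M \<Longrightarrow> ty k = ThreePhase \<Longrightarrow> k \<noteq> m \<Longrightarrow> b < 3 \<Longrightarrow> K j (3*k+b) = K j (3*k)"
  shows "(\<Sum>l<3*M. K j l * (x l * p (l div 3))) = (\<Sum>l<3*M. K j l * (xs l * p (l div 3)))"
proof -
  have blk: "K j (3*k) * (x (3*k) * p k) + K j (3*k+1) * (x (3*k+1) * p k) + K j (3*k+2) * (x (3*k+2) * p k)
     = K j (3*k) * (xs (3*k) * p k) + K j (3*k+1) * (xs (3*k+1) * p k) + K j (3*k+2) * (xs (3*k+2) * p k)"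
    if k: "k < M" for k
  proof (cases "ty k \<noteq> ThreePhase \<or> k = m")
    case True
    then have "\<forall>i<3. x (3*k+i) = xs (3*k+i)" using agree k by blast
    note a = this[rule_format, of 0] this[rule_format, of 1] this[rule_format, of 2]
    have "x (3*k) = xs (3*k)" "x (3*k+1) = xs (3*k+1)" "x (3*k+2) = xs (3*k+2)"
      using a by simp_all
    then show ?thesis by simp
  next
    case False
    then have K1: "K j (3*k+1) = K j (3*k)" and K2: "K j (3*k+2) = K j (3*k)"
      using const[of k 1] const[of k 2] k by auto
    have s1: "x (3*k) + x (3*k+1) + x (3*k+2) = 1" and s2: "xs (3*k) + xs (3*k+1) + xs (3*k+2) = 1"
      using feasible_block[OF x k] feasible_block[OF xs k] by auto
    have "\<forall>y. K j (3*k) * (y (3*k) * p k) + K j (3*k+1) * (y (3*k+1) * p k) + K j (3*k+2) * (y (3*k+2) * p k)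
       = K j (3*k) * p k * (y (3*k) + y (3*k+1) + y (3*k+2))"
      unfolding K1 K2 by (simp add: algebra_simps)
    then show ?thesis using s1 s2 by simp
  qed
  have d: "(3*k+i) div 3 = k" if "i < 3" for k i :: nat using that by simp
  have d1: "Suc (3*k) div 3 = k" for k using d[of 1 k] by simp
  have d2: "Suc (Suc (3*k)) div 3 = k" for k using d[of 2 k] by simp
  show ?thesis
    unfolding sum_blocks3[of "\<lambda>l. K j l * (x l * p (l div 3))"] sum_blocks3[of "\<lambda>l. K j l * (xs l * p (l div 3))"]
    using blk by (intro sum.cong refl) (simp add: d1 d2)
qed

lemma U_const3:
  assumes "ty k = ThreePhase" "b < 3"
  shows "U1 \<nu> ty l (3*k+b) = U1 \<nu> ty l (3*k)" "U2 \<nu> ty l (3*k+b) = U2 \<nu> ty l (3*k)"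
proof -
  have d: "(3*k+b) div 3 = k" "(3*k) div 3 = k" using assms(2) by simp_all
  show "U1 \<nu> ty l (3*k+b) = U1 \<nu> ty l (3*k)" unfolding U1_def d using assms(1) by simp
  show "U2 \<nu> ty l (3*k+b) = U2 \<nu> ty l (3*k)" unfolding U2_def d using assms(1) by simp
qed

lemma K_const3:
  assumes "ty k = ThreePhase" "b < 3"
  shows "Khat N \<nu> ty G H j (3*k+b) = Khat N \<nu> ty G H j (3*k)"
    and "Lhat N \<nu> ty G H j (3*k+b) = Lhat N \<nu> ty G H j (3*k)"
  unfolding Khat_def Lhat_def U_const3[where ty=ty and k=k and b=b, OF assms] by (rule refl)+

lemma vtil_partb:
  assumes x: "x \<in> feasible M" and xs: "xs \<in> feasible M"
    and hm: "\<forall>i<3. x (3*m+i) = xs (3*m+i)"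
    and hk: "\<forall>k<M. k \<noteq> m \<and> ty k \<noteq> ThreePhase \<longrightarrow> (\<forall>i<3. x (3*k+i) = xs (3*k+i))"
  shows "vtil M (Khat N \<nu> ty G H) (Lhat N \<nu> ty G H) x vref p q m
       = vtil M (Khat N \<nu> ty G H) (Lhat N \<nu> ty G H) xs vref p q m"
proof -
  have agree: "\<And>k. k < M \<Longrightarrow> ty k \<noteq> ThreePhase \<or> k = m \<Longrightarrow> (\<forall>i<3. x (3*k+i) = xs (3*k+i))"
    using hm hk by blast
  have X: "Xmat x m j = Xmat xs m j" for j using Xmat_eq[OF hm] .
  have cK: "\<And>k b. k < M \<Longrightarrow> ty k = ThreePhase \<Longrightarrow> k \<noteq> m \<Longrightarrow> b < 3 \<Longrightarrow>
      Khat N \<nu> ty G H j (3*k+b) = Khat N \<nu> ty G H j (3*k)" for j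
    using K_const3(1) by blast
  have cL: "\<And>k b. k < M \<Longrightarrow> ty k = ThreePhase \<Longrightarrow> k \<noteq> m \<Longrightarrow> b < 3 \<Longrightarrow>
      Lhat N \<nu> ty G H j (3*k+b) = Lhat N \<nu> ty G H j (3*k)" for j
    using K_const3(2) by blast
  have rK: "(\<Sum>l<3*M. Khat N \<nu> ty G H j l * (x l * pp (l div 3))) = (\<Sum>l<3*M. Khat N \<nu> ty G H j l * (xs l * pp (l div 3)))"
    for j pp using row_sum_eq[where K="Khat N \<nu> ty G H" and j=j and p=pp, OF x xs agree cK] .
  have rL: "(\<Sum>l<3*M. Lhat N \<nu> ty G H j l * (x l * pp (l div 3))) = (\<Sum>l<3*M. Lhat N \<nu> ty G H j l * (xs l * pp (l div 3)))"
    for j pp using row_sum_eq[where K="Lhat N \<nu> ty G H" and j=j and p=pp, OF x xs agree cL] .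
  show ?thesis unfolding vtil_alt X rK rL ..
qed



lemma meas_sigma_gen:
  assumes f: "f \<in> measurable M N" and sub: "{f -` A \<inter> space M | A. A \<in> sets N} \<subseteq> G"
    and G: "G \<subseteq> Pow (space M)"
  shows "f \<in> measurable (sigma (space M) G) N"
proof (rule measurableI)
  fix x assume "x \<in> space (sigma (space M) G)"
  then have "x \<in> space M" by (simp add: space_measure_of[OF G])
  then show "f x \<in> space N" by (rule measurable_space[OF f])
next
  fix A assume "A \<in> sets N"
  then have "f -` A \<inter> space M \<in> G" using sub by blast
  then show "f -` A \<inter> space (sigma (space M) G) \<in> sets (sigma (space M) G)"
    by (simp add: space_measure_of[OF G] sets_measure_of[OF G])
qed

lemma (in prob_space) indep_set_collect2:
  assumes ind: "indep_sets E I" and st: "\<And>i. i \<in> I \<Longrightarrow> Int_stable (E i)"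
    and S: "S1 \<subseteq> I" "S2 \<subseteq> I" "S1 \<inter> S2 = {}"
  shows "indep_set (sigma_sets (space M) (\<Union>i\<in>S1. E i)) (sigma_sets (space M) (\<Union>i\<in>S2. E i))"
proof -
  have "indep_sets E (\<Union>j\<in>UNIV. case_bool S1 S2 j)"
  proof (rule indep_sets_mono_index[OF _ ind])
    have "(\<Union>j\<in>UNIV. case_bool S1 S2 j) = S1 \<union> S2" by (auto simp: UNIV_bool)
    then show "(\<Union>j\<in>UNIV. case_bool S1 S2 j) \<subseteq> I" using S by simp
  qed
  then have "indep_sets (\<lambda>j. sigma_sets (space M) (\<Union>i\<in>case_bool S1 S2 j. E i)) UNIV"
  proof (rule indep_sets_collect_sigma)
    fix i j assume "i \<in> case_bool S1 S2 j"
    then have "i \<in> I" using S by (cases j) auto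
    then show "Int_stable (E i)" by (rule st)
  next
    show "disjoint_family_on (case_bool S1 S2) UNIV"
      using S by (auto simp: disjoint_family_on_def split: bool.splits)
  qed
  moreover have "(\<lambda>j. sigma_sets (space M) (\<Union>i\<in>case_bool S1 S2 j. E i)) =
     case_bool (sigma_sets (space M) (\<Union>i\<in>S1. E i)) (sigma_sets (space M) (\<Union>i\<in>S2. E i))"
    by (rule ext) (simp split: bool.split)
  ultimately show ?thesis by (simp add: indep_set_def)
qed

lemma (in prob_space) indep_var_sub:
  assumes ind: "indep_set F G" and V: "random_variable borel V" and W: "random_variable borel W"
    and VF: "\<And>A. A \<in> sets borel \<Longrightarrow> V -` A \<inter> space M \<in> F"
    and WG: "\<And>A. A \<in> sets borel \<Longrightarrow> W -` A \<inter> space M \<in> G"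
    and sF: "sigma_algebra (space M) F" and sG: "sigma_algebra (space M) G"
  shows "indep_var borel V borel (W :: 'a \<Rightarrow> real)"
  unfolding indep_var_eq
proof (intro conjI V W)
  have s1: "sigma_sets (space M) {V -` A \<inter> space M |A. A \<in> sets borel} \<subseteq> F"
    using VF by (intro sigma_algebra.sigma_sets_subset[OF sF]) auto
  have s2: "sigma_sets (space M) {W -` A \<inter> space M |A. A \<in> sets borel} \<subseteq> G"
    using WG by (intro sigma_algebra.sigma_sets_subset[OF sG]) auto
  show "indep_set (sigma_sets (space M) {V -` A \<inter> space M |A. A \<in> sets borel})
                  (sigma_sets (space M) {W -` A \<inter> space M |A. A \<in> sets borel})"
    using ind unfolding indep_set_def
    by (rule indep_sets_mono_sets) (use s1 s2 in \<open>auto split: bool.split\<close>)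
qed

lemma pre_in_seq:
  assumes A3: "(\<lambda>\<omega>. \<lambda>t\<in>{1..}. nv t \<omega>) \<in> measurable M (PiM {1..} (\<lambda>_. NM))"
    and t: "(t::nat) \<ge> 1" and C: "C \<in> sets NM"
  shows "nv t -` C \<inter> space M \<in> {(\<lambda>\<omega>. \<lambda>t\<in>{1..}. nv t \<omega>) -` B \<inter> space M | B. B \<in> sets (PiM {1..} (\<lambda>_. NM))}"
proof -
  define B where "B = (\<lambda>f. f t) -` C \<inter> space (PiM {1..} (\<lambda>_. NM))"
  have B: "B \<in> sets (PiM {1..} (\<lambda>_. NM))"
    unfolding B_def using t C by (intro measurable_sets[OF measurable_component_singleton]) auto
  have "(\<lambda>\<omega>. \<lambda>t\<in>{1..}. nv t \<omega>) -` B \<inter> space M = nv t -` C \<inter> space M"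
  proof -
    have "((\<lambda>t\<in>{1..}. nv t \<omega>) \<in> B) = (nv t \<omega> \<in> C)" if w: "\<omega> \<in> space M" for \<omega>
    proof -
      have "(\<lambda>t\<in>{1..}. nv t \<omega>) \<in> space (PiM {1..} (\<lambda>_. NM))" using measurable_space[OF A3 w] .
      moreover have "(\<lambda>t\<in>{1..}. nv t \<omega>) t = nv t \<omega>" using t by simp
      ultimately show ?thesis unfolding B_def by simp
    qed
    then show ?thesis by blast
  qed
  then show ?thesis using B by blast
qed

lemma (in prob_space) indep_family_NU:
  fixes nv :: "nat \<Rightarrow> 'a \<Rightarrow> 'b" and uv :: "nat \<Rightarrow> 'a \<Rightarrow> 'c"
  assumes A1: "indep_vars (\<lambda>_. NM) nv {1..}"
    and A2: "indep_vars (\<lambda>_. UM) uv {1..}"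
    and A3: "(\<lambda>\<omega>. \<lambda>t\<in>{1..}. nv t \<omega>) \<in> measurable M (PiM {1..} (\<lambda>_. NM))"
    and A4: "(\<lambda>\<omega>. \<lambda>t\<in>{1..}. uv t \<omega>) \<in> measurable M (PiM {1..} (\<lambda>_. UM))"
    and A5: "indep_set (sigma_sets (space M) {(\<lambda>\<omega>. \<lambda>t\<in>{1..}. nv t \<omega>) -` A \<inter> space M | A. A \<in> sets (PiM {1..} (\<lambda>_. NM))})
                       (sigma_sets (space M) {(\<lambda>\<omega>. \<lambda>t\<in>{1..}. uv t \<omega>) -` A \<inter> space M | A. A \<in> sets (PiM {1..} (\<lambda>_. UM))})"
  shows "indep_sets (\<lambda>(t,b). if b then {uv t -` A \<inter> space M | A. A \<in> sets UM}
                            else {nv t -` A \<inter> space M | A. A \<in> sets NM}) ({1..} \<times> UNIV)"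
    (is "indep_sets ?E _")
proof (rule indep_setsI)
  have rvN: "random_variable NM (nv t)" if "t \<ge> 1" for t
    using A1 that unfolding indep_vars_def2 by auto
  have rvU: "random_variable UM (uv t)" if "t \<ge> 1" for t
    using A2 that unfolding indep_vars_def2 by auto
  have IN: "indep_sets (\<lambda>t. {nv t -` A \<inter> space M | A. A \<in> sets NM}) {1..}"
    using A1 unfolding indep_vars_def2 by auto
  have IU: "indep_sets (\<lambda>t. {uv t -` A \<inter> space M | A. A \<in> sets UM}) {1..}"
    using A2 unfolding indep_vars_def2 by auto
  show "?E i \<subseteq> events" if "i \<in> {1..} \<times> UNIV" for i
  proof -
    obtain t b where i: "i = (t, b)" by fastforce
    have t: "t \<ge> 1" using that i by auto
    show ?thesis
    proof (cases b)
      case True then show ?thesis using measurable_sets[OF rvU[OF t]] i by auto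
    next
      case False then show ?thesis using measurable_sets[OF rvN[OF t]] i by auto
    qed
  qed
  fix A J assume J: "J \<noteq> {}" "J \<subseteq> {1..} \<times> (UNIV :: bool set)" "finite J"
    and AJ: "\<forall>j\<in>J. A j \<in> ?E j"
  define J0 where "J0 = {t. (t, False) \<in> J}"
  define J1 where "J1 = {t. (t, True) \<in> J}"
  have Jeq: "J = (\<lambda>t. (t, False)) ` J0 \<union> (\<lambda>t. (t, True)) ` J1"
  proof (intro set_eqI iffI)
    fix j assume j: "j \<in> J"
    obtain t b where tb: "j = (t, b)" by fastforce
    show "j \<in> (\<lambda>t. (t, False)) ` J0 \<union> (\<lambda>t. (t, True)) ` J1"
      using j unfolding tb J0_def J1_def by (cases b) auto
  qed (auto simp: J0_def J1_def)
  have fin0: "finite J0" unfolding J0_def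
    using finite_vimageI[OF J(3), of "\<lambda>t. (t, False)"] by (simp add: vimage_def inj_on_def)
  have fin1: "finite J1" unfolding J1_def
    using finite_vimageI[OF J(3), of "\<lambda>t. (t, True)"] by (simp add: vimage_def inj_on_def)
  have J0s: "J0 \<subseteq> {1..}" and J1s: "J1 \<subseteq> {1..}" using J(2) by (auto simp: J0_def J1_def)
  have A0: "A (t, False) \<in> {nv t -` A \<inter> space M | A. A \<in> sets NM}" if "t \<in> J0" for t
    using AJ that by (auto simp: J0_def)
  have A1': "A (t, True) \<in> {uv t -` A \<inter> space M | A. A \<in> sets UM}" if "t \<in> J1" for t
    using AJ that by (auto simp: J1_def)
  define a where "a = (\<Inter>t\<in>J0. A (t, False))"
  define b where "b = (\<Inter>t\<in>J1. A (t, True))"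
  have inter: "(\<Inter>j\<in>J. A j) = a \<inter> b" unfolding Jeq a_def b_def by auto
  have prodJ: "(\<Prod>j\<in>J. prob (A j)) = (\<Prod>t\<in>J0. prob (A (t, False))) * (\<Prod>t\<in>J1. prob (A (t, True)))"
    unfolding Jeq
    by (subst prod.union_disjoint) (auto simp: fin0 fin1 prod.reindex inj_on_def)
  have pa: "prob a = (\<Prod>t\<in>J0. prob (A (t, False)))" if "J0 \<noteq> {}"
    unfolding a_def by (rule indep_setsD[OF IN J0s that fin0]) (use A0 in auto)
  have pb: "prob b = (\<Prod>t\<in>J1. prob (A (t, True)))" if "J1 \<noteq> {}"
    unfolding b_def by (rule indep_setsD[OF IU J1s that fin1]) (use A1' in auto)
  have genN: "{(\<lambda>\<omega>. \<lambda>t\<in>{1..}. nv t \<omega>) -` A \<inter> space M | A. A \<in> sets (PiM {1..} (\<lambda>_. NM))} \<subseteq> Pow (space M)"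
    by auto
  have genU: "{(\<lambda>\<omega>. \<lambda>t\<in>{1..}. uv t \<omega>) -` A \<inter> space M | A. A \<in> sets (PiM {1..} (\<lambda>_. UM))} \<subseteq> Pow (space M)"
    by auto
  have aN: "a \<in> sigma_sets (space M) {(\<lambda>\<omega>. \<lambda>t\<in>{1..}. nv t \<omega>) -` A \<inter> space M | A. A \<in> sets (PiM {1..} (\<lambda>_. NM))}"
    if "J0 \<noteq> {}"
    unfolding a_def
  proof (rule sigma_sets_INTER[OF genN _ that])
    fix t assume t: "t \<in> J0"
    then obtain C where C: "C \<in> sets NM" "A (t, False) = nv t -` C \<inter> space M" using A0 by blast
    show "A (t, False) \<in> sigma_sets (space M) {(\<lambda>\<omega>. \<lambda>t\<in>{1..}. nv t \<omega>) -` A \<inter> space M | A. A \<in> sets (PiM {1..} (\<lambda>_. NM))}"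
      unfolding C(2) using pre_in_seq[OF A3 _ C(1), of t] t J0s by (intro sigma_sets.Basic) auto
  qed
  have bU: "b \<in> sigma_sets (space M) {(\<lambda>\<omega>. \<lambda>t\<in>{1..}. uv t \<omega>) -` A \<inter> space M | A. A \<in> sets (PiM {1..} (\<lambda>_. UM))}"
    if "J1 \<noteq> {}"
    unfolding b_def
  proof (rule sigma_sets_INTER[OF genU _ that])
    fix t assume t: "t \<in> J1"
    then obtain C where C: "C \<in> sets UM" "A (t, True) = uv t -` C \<inter> space M" using A1' by blast
    show "A (t, True) \<in> sigma_sets (space M) {(\<lambda>\<omega>. \<lambda>t\<in>{1..}. uv t \<omega>) -` A \<inter> space M | A. A \<in> sets (PiM {1..} (\<lambda>_. UM))}"
      unfolding C(2) using pre_in_seq[OF A4 _ C(1), of t] t J1s by (intro sigma_sets.Basic) auto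
  qed
  show "prob (\<Inter>j\<in>J. A j) = (\<Prod>j\<in>J. prob (A j))"
  proof (cases "J0 = {}")
    case True
    then have "J1 \<noteq> {}" using J(1) Jeq by auto
    then show ?thesis unfolding inter prodJ using True pb by (simp add: a_def)
  next
    case False
    note F0 = False
    show ?thesis
    proof (cases "J1 = {}")
      case True
      then show ?thesis unfolding inter prodJ using F0 pa by (simp add: b_def)
    next
      case False
      have "prob (a \<inter> b) = prob a * prob b"
        by (rule indep_setD[OF A5 aN[OF F0] bU[OF False]])
      then show ?thesis unfolding inter prodJ using pa[OF F0] pb[OF False] by simp
    qed
  qed
qed


lemma Int_stable_pre: "Int_stable {f -` A \<inter> \<Omega> | A. A \<in> sets N}"
  unfolding Int_stable_def
proof (safe)
  fix A B assume "A \<in> sets N" "B \<in> sets N"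
  then show "\<exists>C. f -` A \<inter> \<Omega> \<inter> (f -` B \<inter> \<Omega>) = f -` C \<inter> \<Omega> \<and> C \<in> sets N"
    by (intro exI[of _ "A \<inter> B"]) auto
qed

lemma pre_sigma:
  assumes "G \<subseteq> Pow \<Omega>" "f \<in> measurable (sigma \<Omega> G) N" "A \<in> sets N"
  shows "f -` A \<inter> \<Omega> \<in> sigma_sets \<Omega> G"
  using measurable_sets[OF assms(2,3)] by (simp add: sets_measure_of[OF assms(1)] space_measure_of[OF assms(1)])

lemma (in prob_space) indep_NU_consequences:
  fixes nv :: "nat \<Rightarrow> 'a \<Rightarrow> 'b" and uv :: "nat \<Rightarrow> 'a \<Rightarrow> 'c"
  assumes A1: "indep_vars (\<lambda>_. NM) nv {1..}"
    and A2: "indep_vars (\<lambda>_. UM) uv {1..}"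
    and A3: "(\<lambda>\<omega>. \<lambda>t\<in>{1..}. nv t \<omega>) \<in> measurable M (PiM {1..} (\<lambda>_. NM))"
    and A4: "(\<lambda>\<omega>. \<lambda>t\<in>{1..}. uv t \<omega>) \<in> measurable M (PiM {1..} (\<lambda>_. UM))"
    and A5: "indep_set (sigma_sets (space M) {(\<lambda>\<omega>. \<lambda>t\<in>{1..}. nv t \<omega>) -` A \<inter> space M | A. A \<in> sets (PiM {1..} (\<lambda>_. NM))})
                       (sigma_sets (space M) {(\<lambda>\<omega>. \<lambda>t\<in>{1..}. uv t \<omega>) -` A \<inter> space M | A. A \<in> sets (PiM {1..} (\<lambda>_. UM))})"
  shows "\<And>s t g h. s \<ge> 1 \<Longrightarrow> t \<ge> 1 \<Longrightarrow> s \<noteq> t \<Longrightarrow> g \<in> borel_measurable (NM \<Otimes>\<^sub>M UM) \<Longrightarrow>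
            h \<in> borel_measurable (NM \<Otimes>\<^sub>M UM) \<Longrightarrow>
            indep_var borel (\<lambda>\<omega>. g (nv s \<omega>, uv s \<omega>)) borel (\<lambda>\<omega>. (h (nv t \<omega>, uv t \<omega>) :: real))"
    and "\<And>t g h. t \<ge> 1 \<Longrightarrow> g \<in> borel_measurable NM \<Longrightarrow> h \<in> borel_measurable UM \<Longrightarrow>
            indep_var borel (\<lambda>\<omega>. g (nv t \<omega>)) borel (\<lambda>\<omega>. (h (uv t \<omega>) :: real))"
proof -
  define E where "E = (\<lambda>(t,b). if b then {uv t -` A \<inter> space M | A. A \<in> sets UM}
                            else {nv t -` A \<inter> space M | A. A \<in> sets NM})"
  have indE: "indep_sets E ({1..} \<times> UNIV)"
    unfolding E_def by (rule indep_family_NU[OF A1 A2 A3 A4 A5])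
  have stE: "Int_stable (E i)" for i
    unfolding E_def by (cases i) (simp add: Int_stable_pre)
  have rvN: "random_variable NM (nv t)" if "t \<ge> 1" for t
    using A1 that unfolding indep_vars_def2 by auto
  have rvU: "random_variable UM (uv t)" if "t \<ge> 1" for t
    using A2 that unfolding indep_vars_def2 by auto
  have EF: "E (t, False) = {nv t -` A \<inter> space M | A. A \<in> sets NM}" for t by (simp add: E_def)
  have ET: "E (t, True) = {uv t -` A \<inter> space M | A. A \<in> sets UM}" for t by (simp add: E_def)
  have Epow: "E i \<subseteq> Pow (space M)" for i unfolding E_def by (cases i) auto
  have sa: "sigma_algebra (space M) (sigma_sets (space M) (\<Union>i\<in>S. E i))" for S
    using Epow by (intro sigma_algebra_sigma_sets) auto
  have genpow: "(\<Union>i\<in>S. E i) \<subseteq> Pow (space M)" for S using Epow by auto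
  have mN: "nv t \<in> measurable (sigma (space M) (\<Union>i\<in>S. E i)) NM" if "t \<ge> 1" "(t, False) \<in> S" for t S
    by (rule meas_sigma_gen[OF rvN[OF that(1)] _ genpow]) (use that in \<open>auto simp: EF[symmetric]\<close>)
  have mU: "uv t \<in> measurable (sigma (space M) (\<Union>i\<in>S. E i)) UM" if "t \<ge> 1" "(t, True) \<in> S" for t S
    by (rule meas_sigma_gen[OF rvU[OF that(1)] _ genpow]) (use that in \<open>auto simp: ET[symmetric]\<close>)
  show "indep_var borel (\<lambda>\<omega>. g (nv s \<omega>, uv s \<omega>)) borel (\<lambda>\<omega>. (h (nv t \<omega>, uv t \<omega>) :: real))"
    if st: "s \<ge> 1" "t \<ge> 1" "s \<noteq> t" and g: "g \<in> borel_measurable (NM \<Otimes>\<^sub>M UM)"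
      and h: "h \<in> borel_measurable (NM \<Otimes>\<^sub>M UM)" for s t g h
  proof -
    let ?S1 = "{(s, False), (s, True)}" and ?S2 = "{(t, False), (t, True)}"
    have ind: "indep_set (sigma_sets (space M) (\<Union>i\<in>?S1. E i)) (sigma_sets (space M) (\<Union>i\<in>?S2. E i))"
      by (rule indep_set_collect2[OF indE]) (use stE st in auto)
    have pm1: "(\<lambda>\<omega>. g (nv s \<omega>, uv s \<omega>)) \<in> borel_measurable (sigma (space M) (\<Union>i\<in>?S1. E i))"
      by (rule measurable_compose[OF measurable_Pair[OF mN mU] g]) (use st in auto)
    have pm2: "(\<lambda>\<omega>. h (nv t \<omega>, uv t \<omega>)) \<in> borel_measurable (sigma (space M) (\<Union>i\<in>?S2. E i))"
      by (rule measurable_compose[OF measurable_Pair[OF mN mU] h]) (use st in auto)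
    show ?thesis
    proof (rule indep_var_sub[OF ind])
      show "random_variable borel (\<lambda>\<omega>. g (nv s \<omega>, uv s \<omega>))"
        by (rule measurable_compose[OF measurable_Pair[OF rvN rvU] g]) (use st in auto)
      show "random_variable borel (\<lambda>\<omega>. h (nv t \<omega>, uv t \<omega>))"
        by (rule measurable_compose[OF measurable_Pair[OF rvN rvU] h]) (use st in auto)
      show "(\<lambda>\<omega>. g (nv s \<omega>, uv s \<omega>)) -` A \<inter> space M \<in> sigma_sets (space M) (\<Union>i\<in>?S1. E i)"
        if "A \<in> sets borel" for A by (rule pre_sigma[OF genpow pm1 that])
      show "(\<lambda>\<omega>. h (nv t \<omega>, uv t \<omega>)) -` A \<inter> space M \<in> sigma_sets (space M) (\<Union>i\<in>?S2. E i)"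
        if "A \<in> sets borel" for A by (rule pre_sigma[OF genpow pm2 that])
    qed (rule sa)+
  qed
  show "indep_var borel (\<lambda>\<omega>. g (nv t \<omega>)) borel (\<lambda>\<omega>. (h (uv t \<omega>) :: real))"
    if t: "t \<ge> 1" and g: "g \<in> borel_measurable NM" and h: "h \<in> borel_measurable UM" for t g h
  proof -
    let ?S1 = "{(t, False)}" and ?S2 = "{(t, True)}"
    have ind: "indep_set (sigma_sets (space M) (\<Union>i\<in>?S1. E i)) (sigma_sets (space M) (\<Union>i\<in>?S2. E i))"
      by (rule indep_set_collect2[OF indE]) (use stE t in auto)
    have pm1: "(\<lambda>\<omega>. g (nv t \<omega>)) \<in> borel_measurable (sigma (space M) (\<Union>i\<in>?S1. E i))"
      by (rule measurable_compose[OF mN g]) (use t in auto)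
    have pm2: "(\<lambda>\<omega>. h (uv t \<omega>)) \<in> borel_measurable (sigma (space M) (\<Union>i\<in>?S2. E i))"
      by (rule measurable_compose[OF mU h]) (use t in auto)
    show ?thesis
    proof (rule indep_var_sub[OF ind])
      show "random_variable borel (\<lambda>\<omega>. g (nv t \<omega>))"
        by (rule measurable_compose[OF rvN g]) (use t in auto)
      show "random_variable borel (\<lambda>\<omega>. h (uv t \<omega>))"
        by (rule measurable_compose[OF rvU h]) (use t in auto)
      show "(\<lambda>\<omega>. g (nv t \<omega>)) -` A \<inter> space M \<in> sigma_sets (space M) (\<Union>i\<in>?S1. E i)"
        if "A \<in> sets borel" for A by (rule pre_sigma[OF genpow pm1 that])
      show "(\<lambda>\<omega>. h (uv t \<omega>)) -` A \<inter> space M \<in> sigma_sets (space M) (\<Union>i\<in>?S2. E i)"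
        if "A \<in> sets borel" for A by (rule pre_sigma[OF genpow pm2 that])
    qed (rule sa)+
  qed
qed


lemma vtil_restrict:
  "vtil M K L x (\<lambda>j\<in>{..<3*M}. a j) (\<lambda>i\<in>{..<M}. b i) (\<lambda>i\<in>{..<M}. c i) k = vtil M K L x a b c k"
  unfolding vtil_def by (intro arg_cong2[where f="(+)"] sum.cong refl) auto

lemma finite_feasible: "finite (feasible M)"
proof (rule finite_subset)
  show "feasible M \<subseteq> {f. \<forall>j. (j \<in> {..<3*M} \<longrightarrow> f j \<in> {0,1}) \<and> (j \<notin> {..<3*M} \<longrightarrow> f j = 0)}"
    by (auto simp: feasible_def)
  show "finite {f. \<forall>j. (j \<in> {..<3*M} \<longrightarrow> f j \<in> {0::real,1}) \<and> (j \<notin> {..<3*M} \<longrightarrow> f j = 0)}"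
    by (rule finite_set_of_finite_funs) auto
qed

lemma delta_sum1:
  assumes "m < (M::nat)"
  shows "(\<Sum>i<M. (if i = m then 1 else 0) * f i) = (f m :: real)"
proof -
  have "(\<Sum>i<M. (if i = m then 1 else 0) * f i) = (\<Sum>i<M. if i = m then f i else 0)"
    by (intro sum.cong) auto
  also have "\<dots> = f m" using assms by (subst sum.delta) auto
  finally show ?thesis .
qed

lemma delta_sum2:
  assumes "m < (M::nat)"
  shows "(\<Sum>i<M. \<Sum>j<M. (if i = m then 1 else 0) * S i j * (if j = m then 1 else 0)) = (S m m :: real)"
proof -
  have "(\<Sum>j<M. (if i = m then 1 else 0) * S i j * (if j = m then 1 else 0)) = (if i = m then 1 else 0) * S i m" for i
  proof -
    have "(\<Sum>j<M. (if i = m then 1 else 0) * S i j * (if j = m then 1 else 0)) =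
          (\<Sum>j<M. if j = m then (if i = m then 1 else 0) * S i j else 0)"
      by (intro sum.cong) auto
    also have "\<dots> = (if i = m then 1 else 0) * S i m" using assms by (subst sum.delta) auto
    finally show ?thesis .
  qed
  then show ?thesis using delta_sum1[OF assms, of "\<lambda>i. S i m"] by simp
qed

lemma vecM_comp:
  assumes "j < d"
  shows "(\<lambda>v. v j) \<in> borel_measurable (vecM d)"
  unfolding vecM_def using assms by (intro measurable_component_singleton) auto

lemma vtil_meas:
  "(\<lambda>u. vtil M K L x (fst u) (fst (snd u)) (snd (snd u)) k) \<in> borel_measurable (vecM (3*M) \<Otimes>\<^sub>M vecM M \<Otimes>\<^sub>M vecM M)"
proof -
  have c1: "(\<lambda>u. fst u j) \<in> borel_measurable (vecM (3*M) \<Otimes>\<^sub>M vecM M \<Otimes>\<^sub>M vecM M)" if "j < 3*M" for j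
    by (rule measurable_compose[OF measurable_fst vecM_comp[OF that]])
  have c2: "(\<lambda>u. fst (snd u) j) \<in> borel_measurable (vecM (3*M) \<Otimes>\<^sub>M vecM M \<Otimes>\<^sub>M vecM M)" if "j < M" for j
    by (rule measurable_compose[OF measurable_compose[OF measurable_snd measurable_fst] vecM_comp[OF that]])
  have c3: "(\<lambda>u. snd (snd u) j) \<in> borel_measurable (vecM (3*M) \<Otimes>\<^sub>M vecM M \<Otimes>\<^sub>M vecM M)" if "j < M" for j
    by (rule measurable_compose[OF measurable_compose[OF measurable_snd measurable_snd] vecM_comp[OF that]])
  show ?thesis unfolding vtil_def
    by (intro borel_measurable_add borel_measurable_sum borel_measurable_times borel_measurable_const c1 c2 c3) auto
qed

theorem lemma2:
  fixes P :: "'w measure"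
    and N M m :: nat
    and \<nu> :: "nat \<Rightarrow> nat" and ty :: "nat \<Rightarrow> loadtype"
    and G H :: "nat \<Rightarrow> nat \<Rightarrow> real"
    and vref p q n :: "nat \<Rightarrow> 'w \<Rightarrow> nat \<Rightarrow> real"
    and \<Sigma>n :: "nat \<Rightarrow> nat \<Rightarrow> real"
    and xs :: "nat \<Rightarrow> real"
  defines "K \<equiv> Khat N \<nu> ty G H" and "L \<equiv> Lhat N \<nu> ty G H"
  assumes P: "prob_space P"
    and \<nu>: "\<forall>k<M. \<nu> k < N"
    and m: "m < M"
    and xs: "xs \<in> feasible M"
    and \<Sigma>n: "pos_def_mat M \<Sigma>n"
    \<comment> \<open>noise n(t) ~ N(0, Sigma_n), i.i.d.\<close>
    and gauss: "\<forall>t\<ge>1. gaussian_vec P M \<Sigma>n (\<lambda>i \<omega>. n t \<omega> i)"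
    and noise_indep: "prob_space.indep_vars P (\<lambda>_. vecM M)
                        (\<lambda>t \<omega>. \<lambda>i\<in>{..<M}. n t \<omega> i) {1..}"
    and noise_ident: "\<forall>t\<ge>1. distr P (vecM M) (\<lambda>\<omega>. \<lambda>i\<in>{..<M}. n t \<omega> i)
                          = distr P (vecM M) (\<lambda>\<omega>. \<lambda>i\<in>{..<M}. n 1 \<omega> i)"
    \<comment> \<open>(1) noise sequence independent of input sequence\<close>
    and noise_input_indep:
          "(\<lambda>\<omega>. \<lambda>t\<in>{1..}. \<lambda>i\<in>{..<M}. n t \<omega> i) \<in> measurable P (PiM {1..} (\<lambda>_. vecM M))"
          "(\<lambda>\<omega>. \<lambda>t\<in>{1..}. ((\<lambda>j\<in>{..<3*M}. vref t \<omega> j), (\<lambda>i\<in>{..<M}. p t \<omega> i), (\<lambda>i\<in>{..<M}. q t \<omega> i)))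
             \<in> measurable P (PiM {1..} (\<lambda>_. vecM (3*M) \<Otimes>\<^sub>M vecM M \<Otimes>\<^sub>M vecM M))"
          "prob_space.indep_set P
             (sigma_sets (space P) {(\<lambda>\<omega>. \<lambda>t\<in>{1..}. \<lambda>i\<in>{..<M}. n t \<omega> i) -` A \<inter> space P
                | A. A \<in> sets (PiM {1..} (\<lambda>_. vecM M))})
             (sigma_sets (space P) {(\<lambda>\<omega>. \<lambda>t\<in>{1..}. ((\<lambda>j\<in>{..<3*M}. vref t \<omega> j), (\<lambda>i\<in>{..<M}. p t \<omega> i), (\<lambda>i\<in>{..<M}. q t \<omega> i))) -` A \<inter> space P
                | A. A \<in> sets (PiM {1..} (\<lambda>_. vecM (3*M) \<Otimes>\<^sub>M vecM M \<Otimes>\<^sub>M vecM M))})"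
    \<comment> \<open>(2) input triples independent across times\<close>
    and input_indep: "prob_space.indep_vars P (\<lambda>_. vecM (3*M) \<Otimes>\<^sub>M vecM M \<Otimes>\<^sub>M vecM M)
          (\<lambda>t \<omega>. ((\<lambda>j\<in>{..<3*M}. vref t \<omega> j), (\<lambda>i\<in>{..<M}. p t \<omega> i), (\<lambda>i\<in>{..<M}. q t \<omega> i))) {1..}"
    \<comment> \<open>(3) bounded second moments of the voltage difference\<close>
    and moments: "\<forall>x\<in>feasible M. (SUP t\<in>{1..}. \<integral>\<^sup>+ \<omega>. ennreal (\<Sum>k<M.
          (vtil M K L xs (vref t \<omega>) (p t \<omega>) (q t \<omega>) k - vtil M K L x (vref t \<omega>) (p t \<omega>) (q t \<omega>) k)\<^sup>2) \<partial>P) < \<infinity>"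
  shows "(AE \<omega> in P. \<exists>c. (\<lambda>T. fmT M K L vref p q n xs m T xs \<omega>) \<longlonglongrightarrow> c \<and>
            (\<forall>x\<in>feasible M. ereal c \<le> liminf (\<lambda>T. ereal (fmT M K L vref p q n xs m T x \<omega>))))
       \<and> (\<forall>x\<in>feasible M.
            (\<forall>i<3. x (3*m+i) = xs (3*m+i)) \<and>
            (\<forall>k<M. k \<noteq> m \<and> ty k \<noteq> ThreePhase \<longrightarrow> (\<forall>i<3. x (3*k+i) = xs (3*k+i)))
          \<longrightarrow> (\<forall>t \<omega>. vtil M K L x (vref t \<omega>) (p t \<omega>) (q t \<omega>) m
                     = vtil M K L xs (vref t \<omega>) (p t \<omega>) (q t \<omega>) m)
            \<and> (AE \<omega> in P. \<exists>c. (\<lambda>T. fmT M K L vref p q n xs m T x \<omega>) \<longlonglongrightarrow> c \<and>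
                 (\<forall>x'\<in>feasible M. ereal c \<le> liminf (\<lambda>T. ereal (fmT M K L vref p q n xs m T x' \<omega>)))))"
proof -
  interpret prob_space P by (rule P)
  let ?UM = "vecM (3*M) \<Otimes>\<^sub>M vecM M \<Otimes>\<^sub>M vecM M"
  note cons = indep_NU_consequences[where nv="\<lambda>t \<omega>. \<lambda>i\<in>{..<M}. n t \<omega> i"
      and uv="\<lambda>t \<omega>. ((\<lambda>j\<in>{..<3*M}. vref t \<omega> j), (\<lambda>i\<in>{..<M}. p t \<omega> i), (\<lambda>i\<in>{..<M}. q t \<omega> i))"
      and NM="vecM M" and UM="?UM",
      OF noise_indep input_indep noise_input_indep(1) noise_input_indep(2) noise_input_indep(3)]
  have rvN: "(\<lambda>\<omega>. \<lambda>i\<in>{..<M}. n t \<omega> i) \<in> measurable P (vecM M)" if "t \<ge> 1" for t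
    using noise_indep that unfolding indep_vars_def2 by auto
  have rvU: "(\<lambda>\<omega>. ((\<lambda>j\<in>{..<3*M}. vref t \<omega> j), (\<lambda>i\<in>{..<M}. p t \<omega> i), (\<lambda>i\<in>{..<M}. q t \<omega> i))) \<in> measurable P ?UM"
    if "t \<ge> 1" for t
    using input_indep that unfolding indep_vars_def2 by auto
  define Dfun where "Dfun x u = vtil M K L xs (fst u) (fst (snd u)) (snd (snd u)) m
                                - vtil M K L x (fst u) (fst (snd u)) (snd (snd u)) m" for x u
  define D where "D x t \<omega> = vtil M K L xs (vref t \<omega>) (p t \<omega>) (q t \<omega>) m
                                - vtil M K L x (vref t \<omega>) (p t \<omega>) (q t \<omega>) m" for x t \<omega>
  define Y where "Y t \<omega> = n t \<omega> m" for t \<omega>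
  have Dfun_m: "Dfun x \<in> borel_measurable ?UM" for x
    unfolding Dfun_def by (intro borel_measurable_diff vtil_meas)
  have Dfun_eq: "Dfun x ((\<lambda>j\<in>{..<3*M}. vref t \<omega> j), (\<lambda>i\<in>{..<M}. p t \<omega> i), (\<lambda>i\<in>{..<M}. q t \<omega> i)) = D x t \<omega>"
    for x t \<omega> unfolding Dfun_def D_def by (simp add: vtil_restrict)
  have Y_eq: "(\<lambda>i\<in>{..<M}. n t \<omega> i) m = Y t \<omega>" for t \<omega> using m by (simp add: Y_def)
  have cm: "(\<lambda>v. v m) \<in> borel_measurable (vecM M)" by (rule vecM_comp[OF m])
  have Ym: "Y t \<in> borel_measurable P" if "t \<ge> 1" for t
    using measurable_compose[OF rvN[OF that] cm] by (simp add: m Y_def[abs_def])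
  have Dm: "D x t \<in> borel_measurable P" if "t \<ge> 1" for x t
    using measurable_compose[OF rvU[OF that] Dfun_m[of x]] by (simp add: Dfun_eq)
  define \<sigma> where "\<sigma> = sqrt (\<Sigma>n m m)"
  define a where "a i = (if i = m then 1 else (0::real))" for i
  have a_nz: "\<exists>i<M. a i \<noteq> 0" using m by (intro exI[of _ m]) (simp add: a_def)
  have Smm: "\<Sigma>n m m > 0"
    using \<Sigma>n a_nz unfolding pos_def_mat_def a_def by (auto simp: delta_sum2[OF m])
  have \<sigma>: "\<sigma> > 0" using Smm by (simp add: \<sigma>_def)
  have Yd: "distributed P lborel (Y t) (\<lambda>y. ennreal (normal_density 0 \<sigma> y))" if "t \<ge> 1" for t
  proof -
    have "gaussian_vec P M \<Sigma>n (\<lambda>i \<omega>. n t \<omega> i)" using gauss that by auto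
    then have "distributed P lborel (\<lambda>\<omega>. \<Sum>i<M. a i * n t \<omega> i)
        (\<lambda>y. ennreal (normal_density 0 (sqrt (\<Sum>i<M. \<Sum>j<M. a i * \<Sigma>n i j * a j)) y))"
      using a_nz unfolding gaussian_vec_def by blast
    then show ?thesis unfolding a_def by (simp add: delta_sum1[OF m] delta_sum2[OF m] Y_def[abs_def] \<sigma>_def)
  qed
  have YD: "indep_var borel (Y t) borel (D x t)" if "t \<ge> 1" for x t
    using cons(2)[OF that cm Dfun_m[of x]] by (simp add: m Y_def[abs_def] Dfun_eq[abs_def])
  have pw: "indep_var borel (\<lambda>\<omega>. F1 (Y s \<omega>, D x s \<omega>)) borel (\<lambda>\<omega>. (F2 (Y t \<omega>, D x t \<omega>) :: real))"
    if st: "s \<ge> 1" "t \<ge> 1" "s \<noteq> t" and F1: "F1 \<in> borel_measurable (borel \<Otimes>\<^sub>M borel)"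
      and F2: "F2 \<in> borel_measurable (borel \<Otimes>\<^sub>M borel)" for x s t F1 F2
  proof -
    have pm: "(\<lambda>z. (fst z m, Dfun x (snd z))) \<in> measurable (vecM M \<Otimes>\<^sub>M ?UM) (borel \<Otimes>\<^sub>M borel)"
      by (intro measurable_Pair measurable_compose[OF measurable_fst cm] measurable_compose[OF measurable_snd Dfun_m])
    have g1: "(\<lambda>z. F1 (fst z m, Dfun x (snd z))) \<in> borel_measurable (vecM M \<Otimes>\<^sub>M ?UM)"
      using measurable_compose[OF pm F1] by simp
    have g2: "(\<lambda>z. F2 (fst z m, Dfun x (snd z))) \<in> borel_measurable (vecM M \<Otimes>\<^sub>M ?UM)"
      using measurable_compose[OF pm F2] by simp
    show ?thesis using cons(1)[OF st g1 g2] by (simp add: m Y_def[abs_def] Dfun_eq)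
  qed
  have mom: "\<exists>Bd. (\<forall>t\<ge>1. integrable P (\<lambda>\<omega>. (D x t \<omega>)\<^sup>2) \<and> expectation (\<lambda>\<omega>. (D x t \<omega>)\<^sup>2) \<le> Bd)"
    if x: "x \<in> feasible M" for x
  proof -
    define S where "S = (SUP t\<in>{1..}. \<integral>\<^sup>+ \<omega>. ennreal (\<Sum>k<M.
          (vtil M K L xs (vref t \<omega>) (p t \<omega>) (q t \<omega>) k - vtil M K L x (vref t \<omega>) (p t \<omega>) (q t \<omega>) k)\<^sup>2) \<partial>P)"
    have S: "S < \<infinity>" using moments x by (simp add: S_def)
    have le: "(\<integral>\<^sup>+ \<omega>. ennreal ((D x t \<omega>)\<^sup>2) \<partial>P) \<le> S" if t: "t \<ge> 1" for t
    proof -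
      have "(\<integral>\<^sup>+ \<omega>. ennreal ((D x t \<omega>)\<^sup>2) \<partial>P) \<le> (\<integral>\<^sup>+ \<omega>. ennreal (\<Sum>k<M.
          (vtil M K L xs (vref t \<omega>) (p t \<omega>) (q t \<omega>) k - vtil M K L x (vref t \<omega>) (p t \<omega>) (q t \<omega>) k)\<^sup>2) \<partial>P)"
      proof (rule nn_integral_mono)
        fix \<omega>
        have "(D x t \<omega>)\<^sup>2 \<le> (\<Sum>k<M.
          (vtil M K L xs (vref t \<omega>) (p t \<omega>) (q t \<omega>) k - vtil M K L x (vref t \<omega>) (p t \<omega>) (q t \<omega>) k)\<^sup>2)"
          unfolding D_def using m by (intro member_le_sum) auto
        then show "ennreal ((D x t \<omega>)\<^sup>2) \<le> ennreal (\<Sum>k<M.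
          (vtil M K L xs (vref t \<omega>) (p t \<omega>) (q t \<omega>) k - vtil M K L x (vref t \<omega>) (p t \<omega>) (q t \<omega>) k)\<^sup>2)"
          by (rule ennreal_leI)
      qed
      also have "\<dots> \<le> S" unfolding S_def using t by (intro SUP_upper) auto
      finally show ?thesis .
    qed
    show ?thesis
    proof (intro exI allI impI conjI)
      fix t :: nat assume t: "t \<ge> 1"
      have Dm2: "(\<lambda>\<omega>. (D x t \<omega>)\<^sup>2) \<in> borel_measurable P" using Dm[OF t] by measurable
      show int: "integrable P (\<lambda>\<omega>. (D x t \<omega>)\<^sup>2)"
        by (rule integrableI_nonneg[OF Dm2]) (use le[OF t] S in auto)
      have "expectation (\<lambda>\<omega>. (D x t \<omega>)\<^sup>2) = enn2real (\<integral>\<^sup>+ \<omega>. ennreal ((D x t \<omega>)\<^sup>2) \<partial>P)"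
        by (rule integral_eq_nn_integral[OF Dm2]) auto
      also have "\<dots> \<le> enn2real S" using le[OF t] S by (intro enn2real_mono) auto
      finally show "expectation (\<lambda>\<omega>. (D x t \<omega>)\<^sup>2) \<le> enn2real S" .
    qed
  qed
  have AEx: "AE \<omega> in P. (\<lambda>T. (\<Sum>t\<in>{1..T}. (Y t \<omega>)\<^sup>2) / real T) \<longlonglongrightarrow> \<sigma>\<^sup>2 \<and>
                    (\<lambda>T. (\<Sum>t\<in>{1..T}. Y t \<omega> * D x t \<omega>) / real T) \<longlonglongrightarrow> 0"
    if x: "x \<in> feasible M" for x
  proof -
    obtain Bd where Bd: "\<And>t. t \<ge> 1 \<Longrightarrow> integrable P (\<lambda>\<omega>. (D x t \<omega>)\<^sup>2)"
        "\<And>t. t \<ge> 1 \<Longrightarrow> expectation (\<lambda>\<omega>. (D x t \<omega>)\<^sup>2) \<le> Bd"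
      using mom[OF x] by blast
    show ?thesis
      by (rule main_limits[OF Ym Dm \<sigma> Yd YD pw Bd])
  qed
  have AEall: "AE \<omega> in P. \<forall>x\<in>feasible M. (\<lambda>T. (\<Sum>t\<in>{1..T}. (Y t \<omega>)\<^sup>2) / real T) \<longlonglongrightarrow> \<sigma>\<^sup>2 \<and>
                    (\<lambda>T. (\<Sum>t\<in>{1..T}. Y t \<omega> * D x t \<omega>) / real T) \<longlonglongrightarrow> 0"
    by (rule AE_finite_allI[OF finite_feasible]) (rule AEx)
  have fm_eq: "fmT M K L vref p q n xs m T x \<omega> = (\<Sum>t\<in>{1..T}. (Y t \<omega> + D x t \<omega>)\<^sup>2) / real T" for x T \<omega>
    unfolding fmT_def Y_def D_def by (simp add: algebra_simps)
  have fm_xs: "fmT M K L vref p q n xs m T xs \<omega> = (\<Sum>t\<in>{1..T}. (Y t \<omega>)\<^sup>2) / real T" for T \<omega>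
    unfolding fm_eq by (simp add: D_def)
  have partA: "AE \<omega> in P. \<exists>c. (\<lambda>T. fmT M K L vref p q n xs m T xs \<omega>) \<longlonglongrightarrow> c \<and>
            (\<forall>x\<in>feasible M. ereal c \<le> liminf (\<lambda>T. ereal (fmT M K L vref p q n xs m T x \<omega>)))"
    using AEall
  proof eventually_elim
    case (elim \<omega>)
    have c1: "(\<lambda>T. (\<Sum>t\<in>{1..T}. (Y t \<omega>)\<^sup>2) / real T) \<longlonglongrightarrow> \<sigma>\<^sup>2" using elim xs by blast
    show ?case
    proof (intro exI conjI ballI)
      show "(\<lambda>T. fmT M K L vref p q n xs m T xs \<omega>) \<longlonglongrightarrow> \<sigma>\<^sup>2" unfolding fm_xs by (rule c1)
      fix x assume x: "x \<in> feasible M"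
      have c2: "(\<lambda>T. (\<Sum>t\<in>{1..T}. Y t \<omega> * D x t \<omega>) / real T) \<longlonglongrightarrow> 0" using elim x by blast
      define g where "g T = (\<Sum>t\<in>{1..T}. (Y t \<omega>)\<^sup>2) / real T + 2 * ((\<Sum>t\<in>{1..T}. Y t \<omega> * D x t \<omega>) / real T)" for T
      have gl: "g \<longlonglongrightarrow> \<sigma>\<^sup>2 + 2 * 0" unfolding g_def by (intro tendsto_add tendsto_mult c1 c2 tendsto_const)
      have gle: "g T \<le> fmT M K L vref p q n xs m T x \<omega>" for T
      proof -
        have "(\<Sum>t\<in>{1..T}. (Y t \<omega>)\<^sup>2) + 2 * (\<Sum>t\<in>{1..T}. Y t \<omega> * D x t \<omega>) \<le> (\<Sum>t\<in>{1..T}. (Y t \<omega> + D x t \<omega>)\<^sup>2)"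
        proof -
          have "(\<Sum>t\<in>{1..T}. (Y t \<omega>)\<^sup>2) + 2 * (\<Sum>t\<in>{1..T}. Y t \<omega> * D x t \<omega>) =
                (\<Sum>t\<in>{1..T}. (Y t \<omega>)\<^sup>2 + 2 * (Y t \<omega> * D x t \<omega>))"
            by (simp add: sum.distrib sum_distrib_left)
          also have "\<dots> \<le> (\<Sum>t\<in>{1..T}. (Y t \<omega> + D x t \<omega>)\<^sup>2)"
            by (intro sum_mono) (simp add: power2_eq_square algebra_simps)
          finally show ?thesis .
        qed
        then show ?thesis unfolding g_def fm_eq
          by (simp add: add_divide_distrib[symmetric] divide_right_mono)
      qed
      have "liminf (\<lambda>T. ereal (g T)) = ereal (\<sigma>\<^sup>2)"
        by (rule lim_imp_Liminf) (use gl in auto)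
      moreover have "liminf (\<lambda>T. ereal (g T)) \<le> liminf (\<lambda>T. ereal (fmT M K L vref p q n xs m T x \<omega>))"
        by (rule Liminf_mono) (use gle in auto)
      ultimately show "ereal (\<sigma>\<^sup>2) \<le> liminf (\<lambda>T. ereal (fmT M K L vref p q n xs m T x \<omega>))" by simp
    qed
  qed
  show ?thesis
  proof (intro conjI partA ballI impI)
    fix x assume x: "x \<in> feasible M"
      and h: "(\<forall>i<3. x (3*m+i) = xs (3*m+i)) \<and>
            (\<forall>k<M. k \<noteq> m \<and> ty k \<noteq> ThreePhase \<longrightarrow> (\<forall>i<3. x (3*k+i) = xs (3*k+i)))"
    have veq: "vtil M K L x (vref t \<omega>) (p t \<omega>) (q t \<omega>) m = vtil M K L xs (vref t \<omega>) (p t \<omega>) (q t \<omega>) m" for t \<omega>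
      unfolding K_def L_def using vtil_partb[OF x xs] h by blast
    show "\<forall>t \<omega>. vtil M K L x (vref t \<omega>) (p t \<omega>) (q t \<omega>) m = vtil M K L xs (vref t \<omega>) (p t \<omega>) (q t \<omega>) m"
      using veq by blast
    have "fmT M K L vref p q n xs m T x \<omega> = fmT M K L vref p q n xs m T xs \<omega>" for T \<omega>
      unfolding fmT_def veq ..
    then show "AE \<omega> in P. \<exists>c. (\<lambda>T. fmT M K L vref p q n xs m T x \<omega>) \<longlonglongrightarrow> c \<and>
                 (\<forall>x'\<in>feasible M. ereal c \<le> liminf (\<lambda>T. ereal (fmT M K L vref p q n xs m T x' \<omega>)))"
      using partA by simp
  qed
qed

end
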